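(* Let $\alpha=2^s$ with $s\in\mathbb{Z}$. Let $c_1:\mathcal{C}_\ast(\mathcal{R}^\infty_\alpha)\to\mathcal{C}_\ast(\mathcal{X}_{2\alpha})$ be any augmentation-preserving chain map carried by $C_1^{2\alpha}$, and let $c_2:\mathcal{C}_\ast(\mathcal{X}_{2\alpha})\to\mathcal{C}_\ast(\mathcal{R}^\infty_{2\alpha})$ be any augmentation-preserving chain map carried by $C_2^{2\alpha}$. Then $inc^\ast=c_2^\ast\circ c_1^\ast$ as maps $H(\mathcal{R}^\infty_\alpha)\to H(\mathcal{R}^\infty_{2\alpha})$, where $inc^\ast$ is induced by the inclusion $\mathcal{R}^\infty_\alpha\subseteq\mathcal{R}^\infty_{2\alpha}$.
   Context: Scales $\alpha_s=2^s$, $s\in\mathbb{Z}$. Grids $G_{\alpha_s}\subset\mathbb{R}^d$: $G_{1}=\mathbb{Z}^d$ and $G_{\alpha_{s+1}}=2(G_{\alpha_s}-O_s)+O_s+\frac{\alpha_s}{2}\varepsilon_s$ with $O_s\in G_{\alpha_s}$, $\varepsilon_s\in\{-1,1\}^d$. $\square_{\alpha}$: cubical complex of faces $\prod_j[x_j,x_j+m_j]$, $x\in G_\alpha$, $m_j\in\{0,\alpha\}$. $P\subset\mathbb{R}^d$ finite; $a_\alpha(p)$ is the point of $G_\alpha$ whose Voronoi cell (cube of side $\alpha$ centered at it) contains $p$ (assumed unique); active vertices $V_\alpha=a_\alpha(P)$. A face $f$ is spanned by $V\subseteq G_\alpha$ if $f\cap V\neq\emptyset$ and $f\cap V$ lies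 in no facet of $f$. Active faces: faces spanned by $V_\alpha$. The barycentric subdivision has as simplices the flags $f_0\subsetneq\cdots\subsetneq f_k$ of faces of $\square_\alpha$; $sd(f)$ is the subcomplex of flags of faces contained in $f$. The barycentric span of $V\subseteq G_\alpha$ is the union of $sd(f)$ over the maximal faces $f$ spanned by $V$; $\mathcal{X}_\alpha$ is the barycentric span of $V_\alpha$. $\mathcal{R}^\infty_\alpha$ is the simplicial complex on $P$ whose simplices are the non-empty subsets of $L_\infty$-diameter at most $2\alpha$. Carriers: $C_1^\alpha:\mathcal{R}^\infty_{\alpha/2}\to\mathcal{X}_\alpha$ sends $\{p_0,\dots,p_k\}$ to the barycentric span of $\{a_\alpha(p_0),\dots,a_\alpha(p_k)\}$; $C_2^\alpha:\mathcal{X}_\alpha\to\mathcal{R}^\infty_\alpha$ sends a flag $\sigma$ to the full simplex on $\{p\in P: a_\alpha(p)\text{ is a vertex of }E\}$, $E$ the smallest active face containing all faces of $\sigma$ (ties broken by a fixed total order on active faces). Chain complexes are augmented simplicial chain complexes over a field ($\mathcal{C}_{-1}=$ the field); augmentation-preserving means identity in degree $-1$; a chain map is carried by a carrier $\Phi$ if the image of each simplex $\sigma$ is supported on simplices of $\Phi(\sigma)$. $H$ denotes reduced homology. *)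

theory Defs
  imports Complex_Main "HOL-Library.List_Lexorder" "HOL-Library.Product_Lexorder"
begin

text \<open>A face of the cubical complex at
scale alpha is represented by a pair (x, m): x a grid point, m a list with entries in {0, alpha};
it stands for the box prod_j [x_j, x_j + m_j].\<close>

type_synonym point = "real list"
type_synonym face = "real list \<times> real list"

definition scale :: "int \<Rightarrow> real" where
  "scale s = 2 powr (real_of_int s)"

definition grid_system :: "nat \<Rightarrow> (int \<Rightarrow> point set) \<Rightarrow> bool" where
  "grid_system d G \<longleftrightarrow>
     G 0 = {x. length x = d \<and> (\<forall>j<d. x ! j \<in> \<int>)} \<and>
     (\<forall>s. \<exists>ctr \<in> G s. \<exists>\<epsilon>. length \<epsilon> = d \<and> set \<epsilon> \<subseteq> {-1, 1} \<and>
        G (s + 1) = (\<lambda>x. map (\<lambda>j. 2 * (x ! j - ctr ! j) + ctr ! j + scale s / 2 * \<epsilon> ! j) [0..<d]) ` G s)"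

definition in_cell :: "nat \<Rightarrow> int \<Rightarrow> point \<Rightarrow> point \<Rightarrow> bool" where
  "in_cell d s g p \<longleftrightarrow> (\<forall>j<d. \<bar>p ! j - g ! j\<bar> \<le> scale s / 2)"

definition unique_voronoi :: "nat \<Rightarrow> (int \<Rightarrow> point set) \<Rightarrow> point set \<Rightarrow> bool" where
  "unique_voronoi d G P \<longleftrightarrow> (\<forall>s. \<forall>p\<in>P. \<exists>!g. g \<in> G s \<and> in_cell d s g p)"

definition avor :: "nat \<Rightarrow> (int \<Rightarrow> point set) \<Rightarrow> int \<Rightarrow> point \<Rightarrow> point" where
  "avor d G s p = (THE g. g \<in> G s \<and> in_cell d s g p)"

definition is_face :: "nat \<Rightarrow> (int \<Rightarrow> point set) \<Rightarrow> int \<Rightarrow> face \<Rightarrow> bool" where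
  "is_face d G s f \<longleftrightarrow> fst f \<in> G s \<and> length (snd f) = d \<and> set (snd f) \<subseteq> {0, scale s}"

definition face_set :: "face \<Rightarrow> point set" where
  "face_set f = {y. length y = length (fst f) \<and>
      (\<forall>j<length (fst f). fst f ! j \<le> y ! j \<and> y ! j \<le> fst f ! j + snd f ! j)}"

definition fdim :: "face \<Rightarrow> nat" where
  "fdim f = card {j. j < length (snd f) \<and> snd f ! j \<noteq> 0}"

definition is_facet :: "nat \<Rightarrow> (int \<Rightarrow> point set) \<Rightarrow> int \<Rightarrow> face \<Rightarrow> face \<Rightarrow> bool" where
  "is_facet d G s g f \<longleftrightarrow> is_face d G s g \<and> face_set g \<subseteq> face_set f \<and> fdim g + 1 = fdim f"

definition spanned :: "nat \<Rightarrow> (int \<Rightarrow> point set) \<Rightarrow> int \<Rightarrow> point set \<Rightarrow> face \<Rightarrow> bool" where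
  "spanned d G s V f \<longleftrightarrow> is_face d G s f \<and> face_set f \<inter> V \<noteq> {} \<and>
     (\<forall>g. is_facet d G s g f \<longrightarrow> \<not> (face_set f \<inter> V \<subseteq> face_set g))"

definition max_spanned :: "nat \<Rightarrow> (int \<Rightarrow> point set) \<Rightarrow> int \<Rightarrow> point set \<Rightarrow> face \<Rightarrow> bool" where
  "max_spanned d G s V f \<longleftrightarrow> spanned d G s V f \<and>
     \<not> (\<exists>f'. spanned d G s V f' \<and> face_set f \<subset> face_set f')"

text \<open>Simplices of the barycentric subdivision contained in f: nonempty flags of faces of f.\<close>
definition sd :: "nat \<Rightarrow> (int \<Rightarrow> point set) \<Rightarrow> int \<Rightarrow> face \<Rightarrow> face set set" where
  "sd d G s f = {F. F \<noteq> {} \<and> finite F \<and>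
      (\<forall>g\<in>F. is_face d G s g \<and> face_set g \<subseteq> face_set f) \<and>
      (\<forall>g\<in>F. \<forall>h\<in>F. face_set g \<subseteq> face_set h \<or> face_set h \<subseteq> face_set g)}"

definition bspan :: "nat \<Rightarrow> (int \<Rightarrow> point set) \<Rightarrow> int \<Rightarrow> point set \<Rightarrow> face set set" where
  "bspan d G s V = \<Union> {sd d G s f | f. max_spanned d G s V f}"

definition active_faces :: "nat \<Rightarrow> (int \<Rightarrow> point set) \<Rightarrow> point set \<Rightarrow> int \<Rightarrow> face set" where
  "active_faces d G P s = {f. spanned d G s (avor d G s ` P) f}"

definition Xcplx :: "nat \<Rightarrow> (int \<Rightarrow> point set) \<Rightarrow> point set \<Rightarrow> int \<Rightarrow> face set set" where
  "Xcplx d G P s = bspan d G s (avor d G s ` P)"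

text \<open>Vietoris-Rips complex for the L-infinity metric, parameter alpha (diameter at most 2 alpha).\<close>
definition Rinf :: "point set \<Rightarrow> real \<Rightarrow> point set set" where
  "Rinf P \<alpha> = {S. S \<noteq> {} \<and> S \<subseteq> P \<and>
      (\<forall>p\<in>S. \<forall>q\<in>S. \<forall>j<length p. \<bar>p ! j - q ! j\<bar> \<le> 2 * \<alpha>)}"

definition C1 :: "nat \<Rightarrow> (int \<Rightarrow> point set) \<Rightarrow> int \<Rightarrow> point set \<Rightarrow> face set set" where
  "C1 d G s \<sigma> = bspan d G s (avor d G s ` \<sigma>)"

definition smallest_active ::
  "nat \<Rightarrow> (int \<Rightarrow> point set) \<Rightarrow> point set \<Rightarrow> (face \<times> face) set \<Rightarrow> int \<Rightarrow> face set \<Rightarrow> face" where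
  "smallest_active d G P r s \<sigma> =
    (let cands = {f \<in> active_faces d G P s. \<forall>g\<in>\<sigma>. face_set g \<subseteq> face_set f}
     in THE E. E \<in> cands \<and>
          (\<forall>E'\<in>cands. fdim E < fdim E' \<or> (fdim E = fdim E' \<and> (E, E') \<in> r)))"

definition full_simplex :: "'v set \<Rightarrow> 'v set set" where
  "full_simplex S = {T. T \<noteq> {} \<and> T \<subseteq> S}"

definition C2 ::
  "nat \<Rightarrow> (int \<Rightarrow> point set) \<Rightarrow> point set \<Rightarrow> (face \<times> face) set \<Rightarrow> int \<Rightarrow> face set \<Rightarrow> point set set" where
  "C2 d G P r s \<sigma> =
     full_simplex {p \<in> P. avor d G s p \<in> face_set (smallest_active d G P r s \<sigma>)}"

text \<open>A chain is a finitely supported function on finite vertex sets; the empty set is the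
unique simplex of degree -1, a simplex sigma has degree card sigma - 1. Orientation is given by
the linear order on vertices.\<close>

definition bd :: "'v::linorder set \<Rightarrow> 'v set \<Rightarrow> 'k::field" where
  "bd \<sigma> = (\<lambda>\<tau>. \<Sum>i<card \<sigma>. if \<tau> = \<sigma> - {sorted_list_of_set \<sigma> ! i} then (-1) ^ i else 0)"

definition supp :: "('a \<Rightarrow> 'k::zero) \<Rightarrow> 'a set" where
  "supp x = {\<sigma>. x \<sigma> \<noteq> 0}"

definition ext :: "('a \<Rightarrow> 'b \<Rightarrow> 'k::field) \<Rightarrow> ('a \<Rightarrow> 'k) \<Rightarrow> 'b \<Rightarrow> 'k" where
  "ext c x = (\<lambda>\<tau>. \<Sum>\<sigma>\<in>supp x. x \<sigma> * c \<sigma> \<tau>)"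

definition bdc :: "('v::linorder set \<Rightarrow> 'k::field) \<Rightarrow> 'v set \<Rightarrow> 'k" where
  "bdc x = ext bd x"

definition is_chain :: "'v set set \<Rightarrow> ('v set \<Rightarrow> 'k::zero) \<Rightarrow> bool" where
  "is_chain K x \<longleftrightarrow> finite (supp x) \<and> supp x \<subseteq> insert {} K"

definition homog :: "nat \<Rightarrow> ('v set \<Rightarrow> 'k::zero) \<Rightarrow> bool" where
  "homog n x \<longleftrightarrow> (\<forall>\<sigma>\<in>supp x. card \<sigma> = n)"

definition aug_chain_map ::
  "'v::linorder set set \<Rightarrow> 'w::linorder set set \<Rightarrow> ('v set \<Rightarrow> 'w set \<Rightarrow> 'k::field) \<Rightarrow> bool" where
  "aug_chain_map K L c \<longleftrightarrow>
     (\<forall>\<sigma>\<in>insert {} K. is_chain L (c \<sigma>) \<and> homog (card \<sigma>) (c \<sigma>) \<and> bdc (c \<sigma>) = ext c (bd \<sigma>)) \<and>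
     c {} = (\<lambda>\<tau>. if \<tau> = {} then 1 else 0)"

definition carried :: "'v set set \<Rightarrow> ('v set \<Rightarrow> 'w set \<Rightarrow> 'k::zero) \<Rightarrow> ('v set \<Rightarrow> 'w set set) \<Rightarrow> bool" where
  "carried K c \<Phi> \<longleftrightarrow> (\<forall>\<sigma>\<in>K. supp (c \<sigma>) \<subseteq> \<Phi> \<sigma>)"

end

theory Submission
  imports Defs
begin

definition delta :: "'a \<Rightarrow> 'a \<Rightarrow> 'k::field" where
  "delta \<mu> = (\<lambda>\<tau>. if \<tau> = \<mu> then 1 else 0)"

lemma ext_sum:
  assumes "finite S" "supp x \<subseteq> S"
  shows "ext c x \<tau> = (\<Sum>\<sigma>\<in>S. x \<sigma> * c \<sigma> \<tau>)"
  unfolding ext_def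
  by (rule sum.mono_neutral_left) (use assms in \<open>auto simp: supp_def\<close>)

lemma supp_ext: "supp (ext c x) \<subseteq> (\<Union>\<sigma>\<in>supp x. supp (c \<sigma>))"
proof
  fix \<tau> assume "\<tau> \<in> supp (ext c x)"
  hence "(\<Sum>\<sigma>\<in>supp x. x \<sigma> * c \<sigma> \<tau>) \<noteq> 0" by (simp add: supp_def ext_def)
  then obtain \<sigma> where "\<sigma> \<in> supp x" "x \<sigma> * c \<sigma> \<tau> \<noteq> 0" by (meson sum.neutral)
  thus "\<tau> \<in> (\<Union>\<sigma>\<in>supp x. supp (c \<sigma>))" by (auto simp: supp_def)
qed

lemma finite_supp_ext:
  assumes "finite (supp x)" "\<And>\<sigma>. \<sigma> \<in> supp x \<Longrightarrow> finite (supp (c \<sigma>))"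
  shows "finite (supp (ext c x))"
  by (rule finite_subset[OF supp_ext]) (use assms in auto)

lemma ext_ext:
  assumes "finite (supp x)" "\<And>\<sigma>. \<sigma> \<in> supp x \<Longrightarrow> finite (supp (b \<sigma>))"
  shows "ext c (ext b x) = ext (\<lambda>\<sigma>. ext c (b \<sigma>)) x"
proof
  fix \<tau>
  define T where "T = (\<Union>\<sigma>\<in>supp x. supp (b \<sigma>))"
  have fT: "finite T" using assms by (auto simp: T_def)
  have "ext c (ext b x) \<tau> = (\<Sum>\<mu>\<in>T. ext b x \<mu> * c \<mu> \<tau>)"
    by (rule ext_sum[OF fT]) (use supp_ext[of b x] in \<open>auto simp: T_def\<close>)
  also have "\<dots> = (\<Sum>\<mu>\<in>T. (\<Sum>\<sigma>\<in>supp x. x \<sigma> * b \<sigma> \<mu>) * c \<mu> \<tau>)"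
    by (simp add: ext_def)
  also have "\<dots> = (\<Sum>\<sigma>\<in>supp x. x \<sigma> * (\<Sum>\<mu>\<in>T. b \<sigma> \<mu> * c \<mu> \<tau>))"
    by (simp add: sum_distrib_left sum_distrib_right sum.swap[of _ T] mult.assoc)
  also have "\<dots> = (\<Sum>\<sigma>\<in>supp x. x \<sigma> * ext c (b \<sigma>) \<tau>)"
    by (intro sum.cong refl arg_cong[where f="\<lambda>u. _ * u"] ext_sum[symmetric] fT)
       (auto simp: T_def)
  finally show "ext c (ext b x) \<tau> = ext (\<lambda>\<sigma>. ext c (b \<sigma>)) x \<tau>" by (simp add: ext_def)
qed

lemma ext_diff: "ext (\<lambda>\<sigma> \<tau>. f \<sigma> \<tau> - g \<sigma> \<tau>) x = (\<lambda>\<tau>. ext f x \<tau> - ext g x \<tau>)"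
  by (auto simp: ext_def algebra_simps sum_subtractf)

lemma ext_zero[simp]: "ext c (\<lambda>_. 0) = (\<lambda>_. 0)"
  by (simp add: ext_def supp_def)

lemma ext_zero_fun: "ext (\<lambda>_ _. 0) x = (\<lambda>_. 0)"
  by (simp add: ext_def)

lemma ext_cong: "(\<And>\<sigma>. \<sigma> \<in> supp x \<Longrightarrow> c \<sigma> = c' \<sigma>) \<Longrightarrow> ext c x = ext c' x"
  by (auto simp: ext_def intro!: sum.cong)

lemma supp_delta[simp]: "supp (delta \<mu> :: _ \<Rightarrow> 'k::field) = {\<mu>}"
  by (auto simp: supp_def delta_def)

lemma ext_delta_left[simp]: "ext c (delta \<mu>) = c \<mu>"
  unfolding ext_def supp_delta by (simp add: delta_def)

lemma ext_delta:
  assumes "finite (supp x)"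
  shows "ext delta x = x"
proof
  fix \<tau>
  show "ext delta x \<tau> = x \<tau>"
  proof (cases "\<tau> \<in> supp x")
    case True
    then show ?thesis using assms
      by (simp add: ext_def delta_def if_distrib cong: if_cong)
  next
    case False
    then show ?thesis
      by (auto simp: ext_def delta_def supp_def intro!: sum.neutral)
  qed
qed

lemma ext_minus_right:
  assumes "finite (supp x)" "finite (supp y)"
  shows "ext c (\<lambda>\<tau>. x \<tau> - y \<tau>) = (\<lambda>\<tau>. ext c x \<tau> - ext c y \<tau>)"
proof
  fix \<tau>
  let ?S = "supp x \<union> supp y"
  have "ext c (\<lambda>\<tau>. x \<tau> - y \<tau>) \<tau> = (\<Sum>\<sigma>\<in>?S. (x \<sigma> - y \<sigma>) * c \<sigma> \<tau>)"
    by (rule ext_sum) (use assms in \<open>auto simp: supp_def\<close>)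
  also have "\<dots> = (\<Sum>\<sigma>\<in>?S. x \<sigma> * c \<sigma> \<tau>) - (\<Sum>\<sigma>\<in>?S. y \<sigma> * c \<sigma> \<tau>)"
    by (simp add: algebra_simps sum_subtractf)
  also have "\<dots> = ext c x \<tau> - ext c y \<tau>"
    using ext_sum[of "supp x \<union> supp y" x c \<tau>] ext_sum[of "supp x \<union> supp y" y c \<tau>] assms by simp
  finally show "ext c (\<lambda>\<tau>. x \<tau> - y \<tau>) \<tau> = ext c x \<tau> - ext c y \<tau>" .
qed

lemma supp_minus: "supp (\<lambda>\<tau>. x \<tau> - y \<tau>) \<subseteq> supp x \<union> supp (y :: _ \<Rightarrow> 'k::field)"
  by (auto simp: supp_def)

lemma supp_bd: "supp (bd \<sigma> :: _ \<Rightarrow> 'k::field) \<subseteq> (\<lambda>i. \<sigma> - {sorted_list_of_set \<sigma> ! i}) ` {..<card \<sigma>}"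
proof
  fix \<tau> assume "\<tau> \<in> supp (bd \<sigma> :: _ \<Rightarrow> 'k)"
  hence "(\<Sum>i<card \<sigma>. if \<tau> = \<sigma> - {sorted_list_of_set \<sigma> ! i} then (-1::'k) ^ i else 0) \<noteq> 0"
    by (simp add: supp_def bd_def)
  then obtain i where "i < card \<sigma>" "(if \<tau> = \<sigma> - {sorted_list_of_set \<sigma> ! i} then (-1::'k) ^ i else 0) \<noteq> 0"
    by (rule sum.not_neutral_contains_not_neutral) auto
  hence "i < card \<sigma>" "\<tau> = \<sigma> - {sorted_list_of_set \<sigma> ! i}" by (auto split: if_splits)
  thus "\<tau> \<in> (\<lambda>i. \<sigma> - {sorted_list_of_set \<sigma> ! i}) ` {..<card \<sigma>}" by auto
qed

lemma finite_supp_bd[simp]: "finite (supp (bd \<sigma> :: _ \<Rightarrow> 'k::field))"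
  by (rule finite_subset[OF supp_bd]) auto

lemma supp_bd_subset: "\<nu> \<in> supp (bd \<sigma> :: _ \<Rightarrow> 'k::field) \<Longrightarrow> \<nu> \<subseteq> \<sigma>"
  using supp_bd by blast

lemma supp_bd_card: "\<nu> \<in> supp (bd \<sigma> :: _ \<Rightarrow> 'k::field) \<Longrightarrow> finite \<sigma> \<and> card \<nu> + 1 = card \<sigma> \<and> (\<exists>x\<in>\<sigma>. \<nu> = \<sigma> - {x})"
proof -
  assume "\<nu> \<in> supp (bd \<sigma> :: _ \<Rightarrow> 'k)"
  then obtain i where i: "i < card \<sigma>" "\<nu> = \<sigma> - {sorted_list_of_set \<sigma> ! i}" using supp_bd by blast
  hence fin: "finite \<sigma>" by (metis card.infinite less_nat_zero_code)
  have "sorted_list_of_set \<sigma> ! i \<in> \<sigma>" using i fin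
    by (metis length_sorted_list_of_set nth_mem set_sorted_list_of_set)
  thus ?thesis using i fin by (auto simp: card_Diff_singleton intro!: bexI[where x="sorted_list_of_set \<sigma> ! i"])
qed

lemma ext_bd:
  "ext c (bd \<sigma>) = (\<lambda>\<tau>. \<Sum>i<card \<sigma>. (-1)^i * c (\<sigma> - {sorted_list_of_set \<sigma> ! i}) \<tau>)"
proof
  fix \<tau>
  let ?S = "(\<lambda>i. \<sigma> - {sorted_list_of_set \<sigma> ! i}) ` {..<card \<sigma>}"
  have "ext c (bd \<sigma>) \<tau> = (\<Sum>\<nu>\<in>?S. bd \<sigma> \<nu> * c \<nu> \<tau>)"
    by (rule ext_sum[OF _ supp_bd]) simp
  also have "\<dots> = (\<Sum>\<nu>\<in>?S. \<Sum>i<card \<sigma>. (if \<nu> = \<sigma> - {sorted_list_of_set \<sigma> ! i} then (-1)^i else 0) * c \<nu> \<tau>)"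
    by (simp add: bd_def sum_distrib_right)
  also have "\<dots> = (\<Sum>i<card \<sigma>. \<Sum>\<nu>\<in>?S. (if \<nu> = \<sigma> - {sorted_list_of_set \<sigma> ! i} then (-1)^i * c \<nu> \<tau> else 0))"
    by (subst sum.swap) (intro sum.cong refl, simp)
  also have "\<dots> = (\<Sum>i<card \<sigma>. (-1)^i * c (\<sigma> - {sorted_list_of_set \<sigma> ! i}) \<tau>)"
    by (intro sum.cong refl) (subst sum.delta, auto)
  finally show "ext c (bd \<sigma>) \<tau> = (\<Sum>i<card \<sigma>. (-1)^i * c (\<sigma> - {sorted_list_of_set \<sigma> ! i}) \<tau>)" .
qed

lemma sl_insert_min:
  assumes "finite \<mu>" "\<forall>x\<in>\<mu>. v < x"
  shows "sorted_list_of_set (insert v \<mu>) = v # sorted_list_of_set \<mu>"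
proof -
  have "sorted (v # sorted_list_of_set \<mu>)" "distinct (v # sorted_list_of_set \<mu>)"
    using assms by (auto simp: less_imp_le)
  hence "sorted_list_of_set (set (v # sorted_list_of_set \<mu>)) = v # sorted_list_of_set \<mu>"
    by (rule sorted_list_of_set.idem_if_sorted_distinct)
  thus ?thesis using assms by simp
qed

lemma bd_insert_min:
  assumes "finite \<mu>" "\<forall>x\<in>\<mu>. v < x"
  shows "(bd (insert v \<mu>) :: _ \<Rightarrow> 'k::field) =
     (\<lambda>\<tau>. delta \<mu> \<tau> - ext (\<lambda>\<nu>. delta (insert v \<nu>)) (bd \<mu>) \<tau>)"
proof
  fix \<tau>
  let ?xs = "sorted_list_of_set \<mu>"
  have vn: "v \<notin> \<mu>" using assms by auto
  have c: "card (insert v \<mu>) = Suc (card \<mu>)" using assms vn by simp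
  have sl: "sorted_list_of_set (insert v \<mu>) = v # ?xs" by (rule sl_insert_min[OF assms])
  have mem: "i < card \<mu> \<Longrightarrow> ?xs ! i \<in> \<mu>" for i
    using assms by (metis length_sorted_list_of_set nth_mem set_sorted_list_of_set)
  have eq: "i < card \<mu> \<Longrightarrow> insert v \<mu> - {?xs ! i} = insert v (\<mu> - {?xs ! i})" for i
    using mem[of i] vn by auto
  have "bd (insert v \<mu>) \<tau> = (\<Sum>i<Suc (card \<mu>). if \<tau> = insert v \<mu> - {(v # ?xs) ! i} then (-1::'k) ^ i else 0)"
    by (simp add: bd_def c sl)
  also have "\<dots> = delta \<mu> \<tau> + (\<Sum>i<card \<mu>. if \<tau> = insert v \<mu> - {?xs ! i} then (-1::'k) ^ Suc i else 0)"
    by (subst sum.lessThan_Suc_shift) (simp add: vn delta_def)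
  also have "(\<Sum>i<card \<mu>. if \<tau> = insert v \<mu> - {?xs ! i} then (-1::'k) ^ Suc i else 0)
      = - (\<Sum>i<card \<mu>. (-1) ^ i * delta (insert v (\<mu> - {?xs ! i})) \<tau>)"
    by (simp add: sum_negf[symmetric] delta_def, intro sum.cong refl, simp add: eq)
  finally have "bd (insert v \<mu>) \<tau> = delta \<mu> \<tau> - (\<Sum>i<card \<mu>. (-1) ^ i * delta (insert v (\<mu> - {?xs ! i})) \<tau> :: 'k)"
    by simp
  then show "bd (insert v \<mu>) \<tau> = delta \<mu> \<tau> - (ext (\<lambda>\<nu>. delta (insert v \<nu>)) (bd \<mu>) \<tau> :: 'k)"
    unfolding ext_bd by simp
qed

lemma bdc_delta[simp]: "bdc (delta \<mu>) = bd \<mu>"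
  by (simp add: bdc_def)

definition cone :: "'v \<Rightarrow> 'v set \<Rightarrow> 'v set \<Rightarrow> 'k::field" where
  "cone v \<nu> = (if v \<in> \<nu> then (\<lambda>_. 0) else delta (insert v \<nu>))"

lemma bdc_zero[simp]: "bdc (\<lambda>_. 0) = (\<lambda>_. 0)"
  by (simp add: bdc_def)

lemma cone_identity:
  assumes "finite \<nu>" "\<forall>x\<in>\<nu>. v \<le> x"
  shows "(\<lambda>\<tau>. bdc (cone v \<nu> :: _ \<Rightarrow> 'k::field) \<tau> + ext (cone v) (bd \<nu>) \<tau>) = delta \<nu>"
proof (cases "v \<in> \<nu>")
  case False
  hence lt: "\<forall>x\<in>\<nu>. v < x" using assms by (metis order.order_iff_strict)
  have "ext (cone v) (bd \<nu>) = ext (\<lambda>\<nu>'. delta (insert v \<nu>')) (bd \<nu> :: _ \<Rightarrow> 'k)"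
    by (rule ext_cong) (use False supp_bd_subset in \<open>fastforce simp: cone_def\<close>)
  then show ?thesis using False bd_insert_min[OF assms(1) lt, where 'k='k]
    by (simp add: cone_def)
next
  case True
  define \<mu> where "\<mu> = \<nu> - {v}"
  have fm: "finite \<mu>" and lt: "\<forall>x\<in>\<mu>. v < x" using assms by (auto simp: \<mu>_def)
  have nu: "\<nu> = insert v \<mu>" using True by (auto simp: \<mu>_def)
  have vn: "v \<notin> \<mu>" by (simp add: \<mu>_def)
  let ?xs = "sorted_list_of_set \<mu>"
  have sl: "sorted_list_of_set \<nu> = v # ?xs" unfolding nu by (rule sl_insert_min[OF fm lt])
  have c: "card \<nu> = Suc (card \<mu>)" using fm vn nu by simp
  have mem: "i < card \<mu> \<Longrightarrow> ?xs ! i \<in> \<mu>" for i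
    using fm by (metis length_sorted_list_of_set nth_mem set_sorted_list_of_set)
  have z: "i < card \<mu> \<Longrightarrow> cone v (insert v \<mu> - {?xs ! i}) = (\<lambda>_. 0 :: 'k)" for i
    using mem[of i] vn by (auto simp: cone_def nu)
  have "ext (cone v) (bd \<nu>) = (\<lambda>\<tau>. \<Sum>i<Suc (card \<mu>). (-1)^i * cone v (\<nu> - {(v # ?xs) ! i}) \<tau> :: 'k)"
    by (simp add: ext_bd c sl)
  also have "\<dots> = (\<lambda>\<tau>. cone v \<mu> \<tau>)"
    by (subst sum.lessThan_Suc_shift) (simp add: z nu vn)
  also have "\<dots> = delta \<nu>" using vn by (simp add: cone_def nu)
  finally show ?thesis using True by (simp add: cone_def)
qed

lemma bdc_ext:
  assumes "finite (supp x)" "\<And>\<sigma>. \<sigma> \<in> supp x \<Longrightarrow> finite (supp (c \<sigma>))"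
  shows "bdc (ext c x) = ext (\<lambda>\<sigma>. bdc (c \<sigma>)) x"
  unfolding bdc_def by (rule ext_ext[OF assms])

lemma bdbd:
  shows "ext bd (bd \<sigma> :: _ \<Rightarrow> 'k::field) = (\<lambda>_. 0 :: 'k)"
proof (induction "card \<sigma>" arbitrary: \<sigma> rule: less_induct)
  case less
  show ?case
  proof (cases "finite \<sigma> \<and> \<sigma> \<noteq> {}")
    case False
    hence "card \<sigma> = 0" by auto
    hence "bd \<sigma> = (\<lambda>_. 0 :: 'k)" by (simp add: bd_def)
    thus ?thesis by simp
  next
    case True
    define v where "v = Min \<sigma>"
    define \<mu> where "\<mu> = \<sigma> - {v}"
    have vin: "v \<in> \<sigma>" using True by (simp add: v_def)
    have fm: "finite \<mu>" and lt: "\<forall>x\<in>\<mu>. v < x" using True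
      by (auto simp: \<mu>_def v_def order.strict_iff_order)
    have s: "\<sigma> = insert v \<mu>" using vin by (auto simp: \<mu>_def)
    have cm: "card \<mu> < card \<sigma>" using True vin unfolding \<mu>_def by (meson card_Diff1_less)
    let ?K = "\<lambda>\<nu>. delta (insert v \<nu>) :: _ \<Rightarrow> 'k"
    have bds: "bd \<sigma> = (\<lambda>\<tau>. delta \<mu> \<tau> - ext ?K (bd \<mu>) \<tau>)"
      unfolding s by (rule bd_insert_min[OF fm lt])
    have f1: "finite (supp (ext ?K (bd \<mu>)))" by (rule finite_supp_ext) auto
    have "ext bd (bd \<sigma>) = (\<lambda>\<tau>. ext bd (delta \<mu>) \<tau> - ext bd (ext ?K (bd \<mu>)) \<tau>)"
      unfolding bds by (rule ext_minus_right) (auto simp: f1)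
    also have "ext bd (ext ?K (bd \<mu>)) = ext (\<lambda>\<nu>. bd (insert v \<nu>)) (bd \<mu>)"
      by (subst ext_ext) auto
    also have "\<dots> = ext (\<lambda>\<nu> \<tau>. delta \<nu> \<tau> - ext ?K (bd \<nu>) \<tau>) (bd \<mu>)"
    proof (rule ext_cong)
      fix \<nu> assume "\<nu> \<in> supp (bd \<mu> :: _ \<Rightarrow> 'k)"
      hence "\<nu> \<subseteq> \<mu>" by (rule supp_bd_subset)
      hence "finite \<nu>" "\<forall>x\<in>\<nu>. v < x" using fm lt by (auto intro: finite_subset)
      thus "bd (insert v \<nu>) = (\<lambda>\<tau>. delta \<nu> \<tau> - ext ?K (bd \<nu>) \<tau>)" by (rule bd_insert_min)
    qed
    also have "\<dots> = (\<lambda>\<tau>. ext delta (bd \<mu>) \<tau> - ext (\<lambda>\<nu>. ext ?K (bd \<nu>)) (bd \<mu>) \<tau>)"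
      by (rule ext_diff)
    also have "ext (\<lambda>\<nu>. ext ?K (bd \<nu>)) (bd \<mu>) = ext ?K (ext bd (bd \<mu>))"
      by (subst ext_ext) auto
    also have "ext bd (bd \<mu>) = (\<lambda>_. 0 :: 'k)" using less cm by blast
    also have "ext delta (bd \<mu>) = (bd \<mu> :: _ \<Rightarrow> 'k)" by (rule ext_delta) simp
    finally show ?thesis by simp
  qed
qed

lemma supp_cone: "supp (cone v \<mu> :: _ \<Rightarrow> 'k::field) \<subseteq> (if v \<in> \<mu> then {} else {insert v \<mu>})"
  by (auto simp: cone_def supp_def delta_def)

lemma bd_empty: "bd {} = (\<lambda>_. 0)"
  by (simp add: bd_def)

lemma is_chain_finite: "is_chain K x \<Longrightarrow> finite (supp x)"
  by (simp add: is_chain_def)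

lemma homotopy:
  fixes K L :: "'v::linorder set set" and \<phi> :: "'v set \<Rightarrow> 'v set \<Rightarrow> 'k::field"
    and W :: "'v set \<Rightarrow> 'v set"
  assumes Kne: "{} \<notin> K"
  and Kdown: "\<And>\<sigma> \<nu>. \<sigma> \<in> K \<Longrightarrow> \<nu> \<subseteq> \<sigma> \<Longrightarrow> \<nu> \<noteq> {} \<Longrightarrow> \<nu> \<in> K"
  and Kfin: "\<And>\<sigma>. \<sigma> \<in> K \<Longrightarrow> finite \<sigma>"
  and phi: "\<And>\<sigma>. \<sigma> \<in> insert {} K \<Longrightarrow> is_chain L (\<phi> \<sigma>) \<and> homog (card \<sigma>) (\<phi> \<sigma>) \<and> bdc (\<phi> \<sigma>) = ext \<phi> (bd \<sigma>)"
  and phi0: "\<phi> {} = delta {}"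
  and Wsub: "\<And>\<sigma>. \<sigma> \<in> K \<Longrightarrow> \<sigma> \<subseteq> W \<sigma>"
  and Wmono: "\<And>\<sigma> \<nu>. \<sigma> \<in> K \<Longrightarrow> \<nu> \<in> K \<Longrightarrow> \<nu> \<subseteq> \<sigma> \<Longrightarrow> W \<nu> \<subseteq> W \<sigma>"
  and Wphi: "\<And>\<sigma> \<mu>. \<sigma> \<in> K \<Longrightarrow> \<mu> \<in> supp (\<phi> \<sigma>) \<Longrightarrow> \<mu> \<subseteq> W \<sigma>"
  and Wfin: "\<And>\<sigma>. \<sigma> \<in> K \<Longrightarrow> finite (W \<sigma>)"
  and WL: "\<And>\<sigma> T. \<sigma> \<in> K \<Longrightarrow> T \<noteq> {} \<Longrightarrow> T \<subseteq> W \<sigma> \<Longrightarrow> T \<in> L"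
  and z: "is_chain K z" "homog n z" "bdc z = (\<lambda>_. 0)"
  shows "\<exists>w. is_chain L w \<and> homog (Suc n) w \<and> bdc w = (\<lambda>\<tau>. z \<tau> - ext \<phi> z \<tau>)"
proof -
  define Good where "Good D N \<longleftrightarrow> D {} = (\<lambda>_. 0) \<and>
    (\<forall>\<sigma>\<in>K. card \<sigma> < N \<longrightarrow> is_chain L (D \<sigma>) \<and> homog (Suc (card \<sigma>)) (D \<sigma>) \<and>
       (\<forall>\<mu>\<in>supp (D \<sigma>). \<mu> \<subseteq> W \<sigma>) \<and>
       bdc (D \<sigma>) = (\<lambda>\<tau>. delta \<sigma> \<tau> - \<phi> \<sigma> \<tau> - ext D (bd \<sigma>) \<tau>))"
    for D :: "'v set \<Rightarrow> 'v set \<Rightarrow> 'k" and N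
  have faces: "\<nu> \<in> insert {} K \<and> card \<nu> < card \<sigma> \<and> \<nu> \<subseteq> \<sigma>"
    if "\<sigma> \<in> insert {} K" "\<nu> \<in> supp (bd \<sigma> :: _ \<Rightarrow> 'k)" for \<sigma> \<nu>
  proof -
    have h: "finite \<sigma>" "card \<nu> + 1 = card \<sigma>" using supp_bd_card[OF that(2)] by auto
    have sub: "\<nu> \<subseteq> \<sigma>" by (rule supp_bd_subset[OF that(2)])
    show ?thesis
    proof (cases "\<nu> = {}")
      case True
      then show ?thesis using h sub by simp
    next
      case False
      hence "\<sigma> \<noteq> {}" using sub by auto
      hence "\<sigma> \<in> K" using that(1) by simp
      hence "\<nu> \<in> K" using Kdown[OF _ sub False] by blast
      then show ?thesis using h sub by simp
    qed
  qed
  have derived: "is_chain L (D \<sigma>) \<and> homog (Suc (card \<sigma>)) (D \<sigma>) \<and>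
       bdc (D \<sigma>) = (\<lambda>\<tau>. delta \<sigma> \<tau> - \<phi> \<sigma> \<tau> - ext D (bd \<sigma>) \<tau>)"
    if "Good D N" "\<sigma> \<in> insert {} K" "card \<sigma> < N" for D N \<sigma>
  proof (cases "\<sigma> = {}")
    case True
    have "D {} = (\<lambda>_. 0)" using that(1) by (simp add: Good_def)
    then show ?thesis using True phi0
      by (simp add: is_chain_def homog_def supp_def bd_empty delta_def)
  next
    case False
    have "\<sigma> \<in> K" using that(2) False by simp
    thus ?thesis using that(1,3) unfolding Good_def by blast
  qed
  have ex: "\<exists>D. Good D N" for N
  proof (induction N)
    case 0
    show ?case by (rule exI[of _ "\<lambda>_ _. 0"]) (simp add: Good_def)
  next
    case (Suc N)
    then obtain D where D: "Good D N" by blast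
    define y where "y \<sigma> = (\<lambda>\<tau>. delta \<sigma> \<tau> - \<phi> \<sigma> \<tau> - ext D (bd \<sigma>) \<tau>)" for \<sigma>
    define D' where "D' \<sigma> = (if \<sigma> \<in> K \<and> card \<sigma> = N then ext (cone (Min (W \<sigma>))) (y \<sigma>) else D \<sigma>)" for \<sigma>
    have key: "ext D' (bd \<sigma>) = ext D (bd \<sigma>)" if "\<sigma> \<in> K" "card \<sigma> \<le> N" for \<sigma>
    proof (rule ext_cong)
      fix \<nu> assume "\<nu> \<in> supp (bd \<sigma> :: _ \<Rightarrow> 'k)"
      hence "card \<nu> < card \<sigma>" using faces that by blast
      thus "D' \<nu> = D \<nu>" using that by (simp add: D'_def)
    qed
    have "Good D' (Suc N)"
      unfolding Good_def
    proof (rule conjI[OF _ ballI[OF impI]])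
      show "D' {} = (\<lambda>_. 0)" using D Kne by (simp add: D'_def Good_def)
    next
      fix \<sigma> assume sK: "\<sigma> \<in> K" and cs: "card \<sigma> < Suc N"
      show "is_chain L (D' \<sigma>) \<and> homog (Suc (card \<sigma>)) (D' \<sigma>) \<and> (\<forall>\<mu>\<in>supp (D' \<sigma>). \<mu> \<subseteq> W \<sigma>) \<and>
          bdc (D' \<sigma>) = (\<lambda>\<tau>. delta \<sigma> \<tau> - \<phi> \<sigma> \<tau> - ext D' (bd \<sigma>) \<tau>)"
      proof (cases "card \<sigma> < N")
        case True
        have e: "D' \<sigma> = D \<sigma>" using True by (simp add: D'_def)
        have "is_chain L (D \<sigma>) \<and> homog (Suc (card \<sigma>)) (D \<sigma>) \<and> (\<forall>\<mu>\<in>supp (D \<sigma>). \<mu> \<subseteq> W \<sigma>) \<and>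
          bdc (D \<sigma>) = (\<lambda>\<tau>. delta \<sigma> \<tau> - \<phi> \<sigma> \<tau> - ext D (bd \<sigma>) \<tau>)"
          using D sK True unfolding Good_def by blast
        then show ?thesis using key[OF sK] True e by simp
      next
        case False
        hence cN: "card \<sigma> = N" using cs by simp
        define v where "v = Min (W \<sigma>)"
        have sne: "\<sigma> \<noteq> {}" using sK Kne by auto
        have Wne: "W \<sigma> \<noteq> {}" using Wsub[OF sK] sne by auto
        have vW: "v \<in> W \<sigma>" using Wne Wfin[OF sK] by (simp add: v_def)
        have vmin: "\<forall>x\<in>\<mu>. v \<le> x" if "\<mu> \<subseteq> W \<sigma>" for \<mu>
          using that Wfin[OF sK] by (auto simp: v_def)
        have D'\<sigma>: "D' \<sigma> = ext (cone v) (y \<sigma>)" using sK cN by (simp add: D'_def v_def)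
        have sIK: "\<sigma> \<in> insert {} K" using sK by simp
        have ph: "is_chain L (\<phi> \<sigma>)" "homog (card \<sigma>) (\<phi> \<sigma>)" "bdc (\<phi> \<sigma>) = ext \<phi> (bd \<sigma>)"
          using phi[OF sIK] by auto
        have fD: "finite (supp (D \<nu>))" if "\<nu> \<in> supp (bd \<sigma> :: _ \<Rightarrow> 'k)" for \<nu>
          using derived[OF D, of \<nu>] faces[OF sIK that] cN by (auto simp: is_chain_def)
        have fE: "finite (supp (ext D (bd \<sigma>)))"
          by (rule finite_supp_ext) (auto intro: fD)
        have fphi: "finite (supp (\<phi> \<sigma>))" using ph by (simp add: is_chain_def)
        have fdp: "finite (supp (\<lambda>\<tau>. delta \<sigma> \<tau> - \<phi> \<sigma> \<tau>))"
          by (rule finite_subset[OF supp_minus]) (simp add: fphi)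
        have fy: "finite (supp (y \<sigma>))" unfolding y_def
          by (rule finite_subset[OF supp_minus]) (simp add: fdp fE)
        have suppy: "\<mu> \<subseteq> W \<sigma> \<and> card \<mu> = N" if "\<mu> \<in> supp (y \<sigma>)" for \<mu>
        proof -
          have "\<mu> \<in> supp (delta \<sigma> :: _ \<Rightarrow> 'k) \<or> \<mu> \<in> supp (\<phi> \<sigma>) \<or> \<mu> \<in> supp (ext D (bd \<sigma>))"
            using that supp_minus[of "\<lambda>\<tau>. delta \<sigma> \<tau> - \<phi> \<sigma> \<tau>" "ext D (bd \<sigma>)"]
              supp_minus[of "delta \<sigma>" "\<phi> \<sigma>"] unfolding y_def by blast
          moreover have ?thesis if "\<mu> \<in> supp (delta \<sigma> :: _ \<Rightarrow> 'k)"
            using that Wsub[OF sK] cN by simp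
          moreover have ?thesis if "\<mu> \<in> supp (\<phi> \<sigma>)"
            using that Wphi[OF sK] ph(2) cN by (auto simp: homog_def)
          moreover have ?thesis if mE: "\<mu> \<in> supp (ext D (bd \<sigma>))"
          proof -
            obtain \<nu> where nu: "\<nu> \<in> supp (bd \<sigma> :: _ \<Rightarrow> 'k)" "\<mu> \<in> supp (D \<nu>)"
              using mE supp_ext[of D "bd \<sigma>"] by blast
            have fa: "\<nu> \<in> insert {} K" "card \<nu> < card \<sigma>" "\<nu> \<subseteq> \<sigma>" using faces[OF sIK nu(1)] by auto
            have cnu: "card \<nu> + 1 = card \<sigma>" using supp_bd_card[OF nu(1)] by simp
            have "\<nu> \<noteq> {}" using nu(2) D by (auto simp: Good_def supp_def)
            hence nK: "\<nu> \<in> K" using fa by simp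
            have "\<mu> \<subseteq> W \<nu>" "homog (Suc (card \<nu>)) (D \<nu>)"
              using D nK fa cN nu(2) by (auto simp: Good_def)
            thus ?thesis using Wmono[OF sK nK fa(3)] nu(2) cnu cN by (auto simp: homog_def)
          qed
          ultimately show ?thesis by blast
        qed
        have bdE: "bdc (ext D (bd \<sigma>)) = (\<lambda>\<tau>. bd \<sigma> \<tau> - ext \<phi> (bd \<sigma>) \<tau>)"
        proof -
          have "bdc (ext D (bd \<sigma>)) = ext (\<lambda>\<nu>. bdc (D \<nu>)) (bd \<sigma>)"
            by (rule bdc_ext) (auto intro: fD)
          also have "\<dots> = ext (\<lambda>\<nu> \<tau>. delta \<nu> \<tau> - \<phi> \<nu> \<tau> - ext D (bd \<nu>) \<tau>) (bd \<sigma>)"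
          proof (rule ext_cong)
            fix \<nu> assume "\<nu> \<in> supp (bd \<sigma> :: _ \<Rightarrow> 'k)"
            thus "bdc (D \<nu>) = (\<lambda>\<tau>. delta \<nu> \<tau> - \<phi> \<nu> \<tau> - ext D (bd \<nu>) \<tau>)"
              using derived[OF D, of \<nu>] faces[OF sIK] cN by auto
          qed
          also have "\<dots> = (\<lambda>\<tau>. ext delta (bd \<sigma>) \<tau> - ext \<phi> (bd \<sigma>) \<tau> - ext (\<lambda>\<nu>. ext D (bd \<nu>)) (bd \<sigma>) \<tau>)"
            by (simp add: ext_diff)
          also have "ext (\<lambda>\<nu>. ext D (bd \<nu>)) (bd \<sigma>) = ext D (ext bd (bd \<sigma>))"
            by (rule ext_ext[symmetric]) auto
          also have "\<dots> = (\<lambda>_. 0)" by (simp add: bdbd)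
          also have "ext delta (bd \<sigma>) = (bd \<sigma> :: _ \<Rightarrow> 'k)" by (rule ext_delta) simp
          finally show ?thesis by simp
        qed
        have bdy: "bdc (y \<sigma>) = (\<lambda>_. 0)"
        proof -
          have "bdc (y \<sigma>) = (\<lambda>\<tau>. bdc (\<lambda>\<tau>. delta \<sigma> \<tau> - \<phi> \<sigma> \<tau>) \<tau> - bdc (ext D (bd \<sigma>)) \<tau>)"
            unfolding y_def bdc_def by (rule ext_minus_right[OF fdp fE])
          also have "bdc (\<lambda>\<tau>. delta \<sigma> \<tau> - \<phi> \<sigma> \<tau>) = (\<lambda>\<tau>. bdc (delta \<sigma>) \<tau> - bdc (\<phi> \<sigma>) \<tau>)"
            unfolding bdc_def by (rule ext_minus_right) (simp_all add: fphi)
          finally show ?thesis using ph(3) bdE by simp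
        qed
        have bdD': "bdc (D' \<sigma>) = y \<sigma>"
        proof -
          have "bdc (D' \<sigma>) = ext (\<lambda>\<mu>. bdc (cone v \<mu>)) (y \<sigma>)"
            unfolding D'\<sigma> by (rule bdc_ext[OF fy]) (rule finite_subset[OF supp_cone], simp)
          also have "\<dots> = ext (\<lambda>\<mu> \<tau>. delta \<mu> \<tau> - ext (cone v) (bd \<mu>) \<tau>) (y \<sigma>)"
          proof (rule ext_cong)
            fix \<mu> assume "\<mu> \<in> supp (y \<sigma>)"
            hence mW: "\<mu> \<subseteq> W \<sigma>" using suppy by blast
            hence "finite \<mu>" using Wfin[OF sK] finite_subset by blast
            note ci = cone_identity[OF this vmin[OF mW], where 'k='k]
            show "bdc (cone v \<mu>) = (\<lambda>\<tau>. delta \<mu> \<tau> - (ext (cone v) (bd \<mu>) \<tau> :: 'k))"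
            proof
              fix \<tau>
              show "bdc (cone v \<mu>) \<tau> = delta \<mu> \<tau> - (ext (cone v) (bd \<mu>) \<tau> :: 'k)"
                using fun_cong[OF ci, of \<tau>] by (simp add: eq_diff_eq)
            qed
          qed
          also have "\<dots> = (\<lambda>\<tau>. ext delta (y \<sigma>) \<tau> - ext (\<lambda>\<mu>. ext (cone v) (bd \<mu>)) (y \<sigma>) \<tau>)"
            by (rule ext_diff)
          also have "ext (\<lambda>\<mu>. ext (cone v) (bd \<mu>)) (y \<sigma>) = ext (cone v) (bdc (y \<sigma>))"
            unfolding bdc_def by (rule ext_ext[symmetric, OF fy]) simp
          also have "ext delta (y \<sigma>) = y \<sigma>" by (rule ext_delta[OF fy])
          finally show ?thesis by (simp add: bdy)
        qed
        have suppD': "\<exists>\<mu>'. \<mu>' \<in> supp (y \<sigma>) \<and> v \<notin> \<mu>' \<and> \<mu> = insert v \<mu>'"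
          if mD: "\<mu> \<in> supp (D' \<sigma>)" for \<mu>
        proof -
          obtain \<mu>' where "\<mu>' \<in> supp (y \<sigma>)" "\<mu> \<in> supp (cone v \<mu>' :: _ \<Rightarrow> 'k)"
            using mD supp_ext[of "cone v" "y \<sigma>"] unfolding D'\<sigma> by blast
          thus ?thesis using supp_cone[of v \<mu>'] by (cases "v \<in> \<mu>'") auto
        qed
        have fD': "finite (supp (D' \<sigma>))" unfolding D'\<sigma>
          by (rule finite_supp_ext[OF fy]) (rule finite_subset[OF supp_cone], simp)
        have c1: "is_chain L (D' \<sigma>)" unfolding is_chain_def
        proof (intro conjI fD' subsetI)
          fix \<mu> assume "\<mu> \<in> supp (D' \<sigma>)"
          then obtain \<mu>' where m: "\<mu>' \<in> supp (y \<sigma>)" "\<mu> = insert v \<mu>'" using suppD' by blast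
          have "\<mu> \<subseteq> W \<sigma>" using suppy[OF m(1)] vW m(2) by simp
          thus "\<mu> \<in> insert {} L" using WL[OF sK, of \<mu>] m(2) by simp
        qed
        have c2: "homog (Suc (card \<sigma>)) (D' \<sigma>)" unfolding homog_def
        proof
          fix \<mu> assume "\<mu> \<in> supp (D' \<sigma>)"
          then obtain \<mu>' where m: "\<mu>' \<in> supp (y \<sigma>)" "v \<notin> \<mu>'" "\<mu> = insert v \<mu>'" using suppD' by blast
          have "finite \<mu>'" using suppy[OF m(1)] Wfin[OF sK] finite_subset by blast
          thus "card \<mu> = Suc (card \<sigma>)" using m suppy[OF m(1)] cN by simp
        qed
        have c3: "\<forall>\<mu>\<in>supp (D' \<sigma>). \<mu> \<subseteq> W \<sigma>"
        proof
          fix \<mu> assume "\<mu> \<in> supp (D' \<sigma>)"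
          then obtain \<mu>' where m: "\<mu>' \<in> supp (y \<sigma>)" "\<mu> = insert v \<mu>'" using suppD' by blast
          show "\<mu> \<subseteq> W \<sigma>" using suppy[OF m(1)] vW m(2) by simp
        qed
        have c4: "bdc (D' \<sigma>) = (\<lambda>\<tau>. delta \<sigma> \<tau> - \<phi> \<sigma> \<tau> - ext D' (bd \<sigma>) \<tau>)"
          using bdD' key[OF sK] cN by (simp add: y_def)
        show ?thesis using c1 c2 c3 c4 by blast
      qed
    qed
    thus ?case by blast
  qed
  define N where "N = Suc (Max (insert 0 (card ` supp z)))"
  obtain D where D: "Good D N" using ex by blast
  have fz: "finite (supp z)" and zK: "supp z \<subseteq> insert {} K" using z(1) by (auto simp: is_chain_def)
  have cz: "card \<sigma> < N" if "\<sigma> \<in> supp z" for \<sigma>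
  proof -
    have "card \<sigma> \<le> Max (insert 0 (card ` supp z))" using fz that by (intro Max_ge) auto
    thus ?thesis by (simp add: N_def)
  qed
  have dz: "is_chain L (D \<sigma>) \<and> homog (Suc (card \<sigma>)) (D \<sigma>) \<and>
       bdc (D \<sigma>) = (\<lambda>\<tau>. delta \<sigma> \<tau> - \<phi> \<sigma> \<tau> - ext D (bd \<sigma>) \<tau>)" if "\<sigma> \<in> supp z" for \<sigma>
    using derived[OF D _ cz[OF that]] zK that by blast
  have fDz: "finite (supp (D \<sigma>))" if "\<sigma> \<in> supp z" for \<sigma>
    using dz[OF that] by (simp add: is_chain_def)
  have "bdc (ext D z) = ext (\<lambda>\<sigma>. bdc (D \<sigma>)) z" by (rule bdc_ext[OF fz fDz])
  also have "\<dots> = ext (\<lambda>\<sigma> \<tau>. delta \<sigma> \<tau> - \<phi> \<sigma> \<tau> - ext D (bd \<sigma>) \<tau>) z"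
    by (rule ext_cong) (use dz in blast)
  also have "\<dots> = (\<lambda>\<tau>. ext delta z \<tau> - ext \<phi> z \<tau> - ext (\<lambda>\<sigma>. ext D (bd \<sigma>)) z \<tau>)"
    by (simp add: ext_diff)
  also have "ext (\<lambda>\<sigma>. ext D (bd \<sigma>)) z = ext D (bdc z)"
    unfolding bdc_def by (rule ext_ext[symmetric, OF fz]) simp
  also have "ext delta z = z" by (rule ext_delta[OF fz])
  finally have b: "bdc (ext D z) = (\<lambda>\<tau>. z \<tau> - ext \<phi> z \<tau>)" using z(3) by simp
  have c: "is_chain L (ext D z)" unfolding is_chain_def
  proof
    show "finite (supp (ext D z))" by (rule finite_supp_ext[OF fz fDz])
    show "supp (ext D z) \<subseteq> insert {} L"
    proof
      fix \<mu> assume "\<mu> \<in> supp (ext D z)"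
      then obtain \<sigma> where "\<sigma> \<in> supp z" "\<mu> \<in> supp (D \<sigma>)" using supp_ext[of D z] by blast
      thus "\<mu> \<in> insert {} L" using dz unfolding is_chain_def by blast
    qed
  qed
  have h: "homog (Suc n) (ext D z)" unfolding homog_def
  proof
    fix \<mu> assume "\<mu> \<in> supp (ext D z)"
    then obtain \<sigma> where s: "\<sigma> \<in> supp z" "\<mu> \<in> supp (D \<sigma>)" using supp_ext[of D z] by blast
    have "card \<sigma> = n" using z(2) s(1) by (simp add: homog_def)
    thus "card \<mu> = Suc n" using dz[OF s(1)] s(2) by (simp add: homog_def)
  qed
  show ?thesis using b c h by blast
qed

lemma scale_pos: "scale t > 0" by (simp add: scale_def)
lemma scale_succ: "scale (t + 1) = 2 * scale t"
  by (simp add: scale_def powr_add)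
lemma scale_succ': "scale (1 + t) = 2 * scale t"
  using scale_succ[of t] by (simp add: add.commute)
lemma scale_zero: "scale 0 = 1" by (simp add: scale_def)

lemma grid_abstract:
  fixes Tf :: "int \<Rightarrow> real list \<Rightarrow> real list" and b :: "int \<Rightarrow> nat \<Rightarrow> real"
  assumes G0: "G 0 = {x. length x = d \<and> (\<forall>j<d. x ! j \<in> \<int>)}"
    and GT: "\<And>t. G (t + 1) = Tf t ` G t"
    and Tlen: "\<And>t x. length (Tf t x) = d"
    and Tnth: "\<And>t x j. j < d \<Longrightarrow> Tf t x ! j = 2 * x ! j + b t j"
  shows "\<forall>x\<in>G t. length x = d"
    and "\<forall>x\<in>G t. \<forall>y\<in>G t. \<forall>j<d. \<exists>k::int. x ! j - y ! j = of_int k * scale t"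
    and "\<forall>x\<in>G t. \<forall>j<d. x[j := x ! j + scale t] \<in> G t"
proof -
  show len: "\<forall>x\<in>G t. length x = d" for t
  proof
    fix x assume "x \<in> G t"
    hence "x \<in> G ((t - 1) + 1)" by simp
    thus "length x = d" unfolding GT using Tlen by auto
  qed
  have inj: "Tf t x = Tf t y \<Longrightarrow> length x = d \<Longrightarrow> length y = d \<Longrightarrow> x = y" for t x y
  proof (rule nth_equalityI)
    assume "Tf t x = Tf t y" "length x = d" "length y = d"
    show "length x = length y" using \<open>length x = d\<close> \<open>length y = d\<close> by simp
    fix j assume "j < length x"
    hence "Tf t x ! j = Tf t y ! j" "j < d" using \<open>Tf t x = Tf t y\<close> \<open>length x = d\<close> by auto
    thus "x ! j = y ! j" using Tnth by simp
  qed
  show "\<forall>x\<in>G t. \<forall>y\<in>G t. \<forall>j<d. \<exists>k::int. x ! j - y ! j = of_int k * scale t"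
  proof (induction t rule: int_induct[where k=0])
    case base
    show ?case
    proof (intro ballI allI impI)
      fix x y j assume "x \<in> G 0" "y \<in> G 0" "j < d"
      hence "x ! j \<in> \<int>" "y ! j \<in> \<int>" unfolding G0 by auto
      then obtain a b where "x ! j = of_int a" "y ! j = of_int b" by (auto elim!: Ints_cases)
      thus "\<exists>k::int. x ! j - y ! j = of_int k * scale 0"
        by (intro exI[of _ "a - b"]) (simp add: scale_zero)
    qed
  next
    case (step1 i)
    show ?case
    proof (intro ballI allI impI)
      fix x y j assume "x \<in> G (i + 1)" "y \<in> G (i + 1)" "j < d"
      then obtain x0 y0 where "x0 \<in> G i" "y0 \<in> G i" "x = Tf i x0" "y = Tf i y0" unfolding GT by auto
      moreover obtain k where "x0 ! j - y0 ! j = of_int k * scale i" using step1(2) \<open>x0 \<in> G i\<close> \<open>y0 \<in> G i\<close> \<open>j < d\<close> by blast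
      ultimately show "\<exists>k::int. x ! j - y ! j = of_int k * scale (i + 1)"
        using \<open>j < d\<close> by (intro exI[of _ k]) (simp add: Tnth scale_succ scale_succ' algebra_simps)
    qed
  next
    case (step2 i)
    show ?case
    proof (intro ballI allI impI)
      fix x y j assume xy: "x \<in> G (i - 1)" "y \<in> G (i - 1)" and j: "j < d"
      have "Tf (i - 1) x \<in> G i" "Tf (i - 1) y \<in> G i" using xy GT[of "i - 1"] by auto
      then obtain k where "Tf (i - 1) x ! j - Tf (i - 1) y ! j = of_int k * scale i" using step2(2) j by blast
      moreover have "scale i = 2 * scale (i - 1)" using scale_succ[of "i - 1"] by simp
      ultimately show "\<exists>k::int. x ! j - y ! j = of_int k * scale (i - 1)"
        using j by (intro exI[of _ k]) (simp add: Tnth algebra_simps)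
    qed
  qed
  show "\<forall>x\<in>G t. \<forall>j<d. x[j := x ! j + scale t] \<in> G t"
  proof (induction t rule: int_induct[where k=0])
    case base
    show ?case unfolding G0 scale_zero
    proof (intro ballI allI impI)
      fix x j assume "x \<in> {x. length x = d \<and> (\<forall>j<d. x ! j \<in> \<int>)}" "j < d"
      thus "x[j := x ! j + 1] \<in> {x. length x = d \<and> (\<forall>j<d. x ! j \<in> \<int>)}"
        by (auto simp: nth_list_update)
    qed
  next
    case (step1 i)
    show ?case
    proof (intro ballI allI impI)
      fix x j assume "x \<in> G (i + 1)" "j < d"
      then obtain x0 where x0: "x0 \<in> G i" "x = Tf i x0" unfolding GT by auto
      have l0: "length x0 = d" using len x0(1) by blast
      have "x0[j := x0 ! j + scale i] \<in> G i" using step1(2) x0(1) \<open>j < d\<close> by blast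
      moreover have "Tf i (x0[j := x0 ! j + scale i]) = x[j := x ! j + scale (i + 1)]"
        by (rule nth_equalityI) (use x0 \<open>j < d\<close> l0 in \<open>auto simp: Tlen Tnth nth_list_update scale_succ\<close>)
      ultimately show "x[j := x ! j + scale (i + 1)] \<in> G (i + 1)" unfolding GT by (metis image_eqI)
    qed
  next
    case (step2 i)
    show ?case
    proof (intro ballI allI impI)
      fix x j assume x: "x \<in> G (i - 1)" and j: "j < d"
      have lx: "length x = d" using len x by blast
      have "Tf (i - 1) x \<in> G i" using x GT[of "i - 1"] by auto
      hence "(Tf (i - 1) x)[j := Tf (i - 1) x ! j + scale i] \<in> G i" using step2(2) j by blast
      also have "G i = Tf (i - 1) ` G (i - 1)" using GT[of "i - 1"] by simp
      finally obtain y where y: "y \<in> G (i - 1)" "Tf (i - 1) y = (Tf (i - 1) x)[j := Tf (i - 1) x ! j + scale i]"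
        by auto
      have si: "scale i = 2 * scale (i - 1)" using scale_succ[of "i - 1"] by simp
      have "Tf (i - 1) (x[j := x ! j + scale (i - 1)]) = (Tf (i - 1) x)[j := Tf (i - 1) x ! j + scale i]"
        by (rule nth_equalityI) (use j lx si in \<open>auto simp: Tlen Tnth nth_list_update\<close>)
      hence "y = x[j := x ! j + scale (i - 1)]"
        using inj[of "i - 1" y] y len lx by (metis length_list_update)
      thus "x[j := x ! j + scale (i - 1)] \<in> G (i - 1)" using y by simp
    qed
  qed
qed

lemma grid_facts:
  assumes "grid_system d G"
  shows "\<forall>x\<in>G t. length x = d"
    and "\<forall>x\<in>G t. \<forall>y\<in>G t. \<forall>j<d. \<exists>k::int. x ! j - y ! j = of_int k * scale t"
    and "\<forall>x\<in>G t. \<forall>j<d. x[j := x ! j + scale t] \<in> G t"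
proof -
  have "\<forall>t. \<exists>c. c \<in> G t \<and> (\<exists>e. G (t + 1) = (\<lambda>x. map (\<lambda>j. 2 * (x ! j - c ! j) + c ! j + scale t / 2 * e ! j) [0..<d]) ` G t)"
    using assms unfolding grid_system_def by blast
  then obtain c where "\<forall>t. c t \<in> G t \<and> (\<exists>e. G (t + 1) = (\<lambda>x. map (\<lambda>j. 2 * (x ! j - c t ! j) + c t ! j + scale t / 2 * e ! j) [0..<d]) ` G t)"
    by (erule choice[THEN exE])
  hence "\<forall>t. \<exists>e. G (t + 1) = (\<lambda>x. map (\<lambda>j. 2 * (x ! j - c t ! j) + c t ! j + scale t / 2 * e ! j) [0..<d]) ` G t"
    by blast
  then obtain e where ce: "\<forall>t. G (t + 1) = (\<lambda>x. map (\<lambda>j. 2 * (x ! j - c t ! j) + c t ! j + scale t / 2 * e t ! j) [0..<d]) ` G t"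
    by (erule choice[THEN exE])
  define Tf where "Tf t x = map (\<lambda>j. 2 * (x ! j - c t ! j) + c t ! j + scale t / 2 * e t ! j) [0..<d]" for t x
  define b where "b t j = - c t ! j + scale t / 2 * e t ! j" for t j
  have G0: "G 0 = {x. length x = d \<and> (\<forall>j<d. x ! j \<in> \<int>)}" using assms by (simp add: grid_system_def)
  have GT: "\<And>t. G (t + 1) = Tf t ` G t" using ce by (simp add: Tf_def[abs_def])
  have Tlen: "\<And>t x. length (Tf t x) = d" by (simp add: Tf_def)
  have Tnth: "\<And>t x j. j < d \<Longrightarrow> Tf t x ! j = 2 * x ! j + b t j" by (simp add: Tf_def b_def algebra_simps)
  note g = grid_abstract[OF G0 GT Tlen Tnth]
  show "\<forall>x\<in>G t. length x = d" by (rule g(1))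
  show "\<forall>x\<in>G t. \<forall>y\<in>G t. \<forall>j<d. \<exists>k::int. x ! j - y ! j = of_int k * scale t" by (rule g(2))
  show "\<forall>x\<in>G t. \<forall>j<d. x[j := x ! j + scale t] \<in> G t" by (rule g(3))
qed

lemma avor_facts:
  assumes "unique_voronoi d G P" "p \<in> P"
  shows "avor d G t p \<in> G t" "in_cell d t (avor d G t p) p"
    and "g \<in> G t \<Longrightarrow> in_cell d t g p \<Longrightarrow> g = avor d G t p"
proof -
  have u: "\<exists>!g. g \<in> G t \<and> in_cell d t g p" using assms unfolding unique_voronoi_def by blast
  from theI'[OF u] show "avor d G t p \<in> G t" "in_cell d t (avor d G t p) p"
    by (simp_all add: avor_def)
  show "g \<in> G t \<Longrightarrow> in_cell d t g p \<Longrightarrow> g = avor d G t p"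
    unfolding avor_def by (rule the1_equality[OF u, symmetric]) simp
qed

lemma grid_close:
  assumes gs: "grid_system d G" and uv: "unique_voronoi d G P"
    and q: "q \<in> P" and q': "q' \<in> P" and j: "j < d"
    and close: "q ! j - q' ! j \<le> scale t"
  shows "avor d G t q ! j - avor d G t q' ! j \<le> scale t"
proof (rule ccontr)
  let ?h = "scale t"
  define g where "g = avor d G t q"
  define g' where "g' = avor d G t q'"
  assume "\<not> ?thesis"
  hence gt: "g ! j - g' ! j > ?h" by (simp add: g_def g'_def)
  have gG: "g \<in> G t" "g' \<in> G t" using avor_facts[OF uv q] avor_facts[OF uv q'] by (simp_all add: g_def g'_def)
  obtain k :: int where k: "g ! j - g' ! j = of_int k * ?h" using grid_facts(2)[OF gs] gG j by blast
  have hp: "?h > 0" by (rule scale_pos)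
  have "of_int k * ?h > 1 * ?h" using gt k by simp
  hence "of_int k > (1::real)" using hp by (simp only: mult_less_cancel_right)
  hence "k \<ge> 2" by simp
  hence "of_int k * ?h \<ge> 2 * ?h" using hp by (intro mult_right_mono) auto
  hence g2: "g ! j - g' ! j \<ge> 2 * ?h" using k by simp
  have c1: "\<bar>q ! j - g ! j\<bar> \<le> ?h / 2" using avor_facts(2)[OF uv q] j by (simp add: in_cell_def g_def)
  have c2: "\<bar>q' ! j - g' ! j\<bar> \<le> ?h / 2" using avor_facts(2)[OF uv q'] j by (simp add: in_cell_def g'_def)
  have a1: "q ! j \<ge> g ! j - ?h / 2" using c1 abs_le_iff[of "q ! j - g ! j" "?h / 2"] by linarith
  have a2: "q' ! j \<le> g' ! j + ?h / 2" using c2 abs_le_iff[of "q' ! j - g' ! j" "?h / 2"] by linarith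
  have eq: "q' ! j = g' ! j + ?h / 2" using a1 a2 g2 close by linarith
  define g'' where "g'' = g'[j := g' ! j + ?h]"
  have l: "length g' = d" using grid_facts(1)[OF gs] gG by blast
  have "g'' \<in> G t" using grid_facts(3)[OF gs] gG j by (simp add: g''_def)
  moreover have "in_cell d t g'' q'"
    unfolding in_cell_def
  proof (intro allI impI)
    fix i assume i: "i < d"
    have ci: "\<bar>q' ! i - g' ! i\<bar> \<le> ?h / 2"
      using avor_facts(2)[OF uv q'] i by (simp add: in_cell_def g'_def)
    show "\<bar>q' ! i - g'' ! i\<bar> \<le> ?h / 2"
    proof (cases "i = j")
      case True
      then show ?thesis using eq hp l j by (simp add: g''_def)
    next
      case False
      then show ?thesis using ci by (simp add: g''_def)
    qed
  qed
  ultimately have "g'' = g'" using avor_facts(3)[OF uv q'] by (simp add: g'_def)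
  hence "g'' ! j = g' ! j" by simp
  thus False using hp j l by (simp add: g''_def)
qed

lemma face_basic:
  assumes gs: "grid_system d G" and f: "is_face d G t f"
  shows "length (fst f) = d" "length (snd f) = d" "fst f \<in> G t"
    and "\<And>j. j < d \<Longrightarrow> snd f ! j = 0 \<or> snd f ! j = scale t"
    and "face_set f = {y. length y = d \<and> (\<forall>j<d. fst f ! j \<le> y ! j \<and> y ! j \<le> fst f ! j + snd f ! j)}"
    and "fdim f = card {j. j < d \<and> snd f ! j \<noteq> 0}"
proof -
  show l1: "length (fst f) = d" using f grid_facts(1)[OF gs] by (auto simp: is_face_def)
  show l2: "length (snd f) = d" using f by (simp add: is_face_def)
  show "fst f \<in> G t" using f by (simp add: is_face_def)
  show "\<And>j. j < d \<Longrightarrow> snd f ! j = 0 \<or> snd f ! j = scale t"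
    using f l2 by (auto simp: is_face_def dest!: nth_mem)
  show "face_set f = {y. length y = d \<and> (\<forall>j<d. fst f ! j \<le> y ! j \<and> y ! j \<le> fst f ! j + snd f ! j)}"
    by (simp add: face_set_def l1)
  show "fdim f = card {j. j < d \<and> snd f ! j \<noteq> 0}" by (simp add: fdim_def l2)
qed

lemma face_m_nonneg:
  assumes "grid_system d G" "is_face d G t f" "j < d"
  shows "snd f ! j \<ge> 0"
  using face_basic(4)[OF assms] scale_pos[of t] by auto

lemma face_corner:
  assumes gs: "grid_system d G" and f: "is_face d G t f"
  shows "fst f \<in> face_set f"
  using face_basic[OF gs f] face_m_nonneg[OF gs f] by auto

lemma face_sub_coords:
  assumes gs: "grid_system d G" and f: "is_face d G t f" and g: "is_face d G t g"
    and sub: "face_set g \<subseteq> face_set f" and j: "j < d"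
  shows "fst f ! j \<le> fst g ! j" "fst g ! j + snd g ! j \<le> fst f ! j + snd f ! j"
proof -
  note bf = face_basic[OF gs f] and bg = face_basic[OF gs g]
  have "fst g \<in> face_set g" by (rule face_corner[OF gs g])
  hence "fst g \<in> face_set f" using sub by blast
  thus "fst f ! j \<le> fst g ! j" using j bf(5) by auto
  let ?y = "(fst g)[j := fst g ! j + snd g ! j]"
  have "?y \<in> face_set g" using bg(1,5) j face_m_nonneg[OF gs g]
    by (auto simp: nth_list_update)
  hence "?y \<in> face_set f" using sub by blast
  thus "fst g ! j + snd g ! j \<le> fst f ! j + snd f ! j" using j bf(5) bg(1) by auto
qed

lemma face_idx_mono:
  assumes gs: "grid_system d G" and f: "is_face d G t f" and g: "is_face d G t g"
    and sub: "face_set g \<subseteq> face_set f"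
  shows "{j. j < d \<and> snd g ! j \<noteq> 0} \<subseteq> {j. j < d \<and> snd f ! j \<noteq> 0}"
proof
  fix j assume "j \<in> {j. j < d \<and> snd g ! j \<noteq> 0}"
  hence j: "j < d" and nz: "snd g ! j \<noteq> 0" by auto
  have "snd g ! j = scale t" using face_basic(4)[OF gs g j] nz by auto
  moreover have "fst f ! j \<le> fst g ! j" "fst g ! j + snd g ! j \<le> fst f ! j + snd f ! j"
    using face_sub_coords[OF gs f g sub j] by auto
  ultimately have "snd f ! j \<ge> scale t" by linarith
  thus "j \<in> {j. j < d \<and> snd f ! j \<noteq> 0}" using j scale_pos[of t] by auto
qed

lemma fdim_mono:
  assumes gs: "grid_system d G" and f: "is_face d G t f" and g: "is_face d G t g"
    and sub: "face_set g \<subseteq> face_set f"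
  shows "fdim g \<le> fdim f"
  unfolding face_basic(6)[OF gs f] face_basic(6)[OF gs g]
  by (rule card_mono[OF _ face_idx_mono[OF assms]]) simp

lemma face_eq:
  assumes gs: "grid_system d G" and f: "is_face d G t f" and g: "is_face d G t g"
    and sub: "face_set g \<subseteq> face_set f" and dim: "fdim f \<le> fdim g"
  shows "g = f"
proof -
  note bf = face_basic[OF gs f] and bg = face_basic[OF gs g]
  have idx: "{j. j < d \<and> snd g ! j \<noteq> 0} = {j. j < d \<and> snd f ! j \<noteq> 0}"
  proof -
    have i1: "{j. j < d \<and> snd g ! j \<noteq> 0} \<subseteq> {j. j < d \<and> snd f ! j \<noteq> 0}"
      by (rule face_idx_mono[OF assms(1-4)])
    have "card {j. j < d \<and> snd g ! j \<noteq> 0} \<le> card {j. j < d \<and> snd f ! j \<noteq> 0}"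
      by (rule card_mono[OF _ i1]) simp
    hence "card {j. j < d \<and> snd g ! j \<noteq> 0} = card {j. j < d \<and> snd f ! j \<noteq> 0}"
      using dim bf(6) bg(6) by simp
    thus ?thesis by (intro card_subset_eq i1) simp_all
  qed
  have m: "snd g ! j = snd f ! j" if j: "j < d" for j
  proof -
    have "(snd g ! j \<noteq> 0) = (snd f ! j \<noteq> 0)" using idx j by blast
    thus ?thesis using bf(4)[OF j] bg(4)[OF j] by auto
  qed
  have x: "fst g ! j = fst f ! j" if j: "j < d" for j
    using face_sub_coords[OF gs f g sub j] m[OF j] by simp
  have "snd g = snd f" by (rule nth_equalityI) (use bf bg m in auto)
  moreover have "fst g = fst f" by (rule nth_equalityI) (use bf bg x in auto)
  ultimately show ?thesis by (simp add: prod_eq_iff)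
qed

lemma fdim_le_d:
  assumes gs: "grid_system d G" and f: "is_face d G t f"
  shows "fdim f < Suc d"
proof -
  have "fdim f \<le> card {..<d}" unfolding face_basic(6)[OF gs f] by (rule card_mono) auto
  thus ?thesis by simp
qed

lemma facets:
  assumes gs: "grid_system d G" and f: "is_face d G t f" and j: "j < d" and mj: "snd f ! j = scale t"
  shows "is_facet d G t (fst f, (snd f)[j := 0]) f"
    and "is_facet d G t ((fst f)[j := fst f ! j + scale t], (snd f)[j := 0]) f"
    and "{y \<in> face_set f. y ! j = fst f ! j} \<subseteq> face_set (fst f, (snd f)[j := 0])"
    and "{y \<in> face_set f. y ! j = fst f ! j + scale t} \<subseteq> face_set ((fst f)[j := fst f ! j + scale t], (snd f)[j := 0])"
proof -
  note bf = face_basic[OF gs f]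
  have hp: "scale t > 0" by (rule scale_pos)
  have nn: "\<And>i. i < d \<Longrightarrow> snd f ! i \<ge> 0" using face_m_nonneg[OF gs f] by blast
  let ?m = "(snd f)[j := 0]"
  let ?xt = "(fst f)[j := fst f ! j + scale t]"
  have setm: "set ?m \<subseteq> {0, scale t}"
    using set_update_subset_insert[of "snd f" j 0] f by (auto simp: is_face_def)
  have fb: "is_face d G t (fst f, ?m)" using f setm by (simp add: is_face_def)
  have xt: "?xt \<in> G t" using grid_facts(3)[OF gs] bf(3) j by blast
  have ft: "is_face d G t (?xt, ?m)" using xt setm bf(2) by (simp add: is_face_def)
  have idx: "{i. i < d \<and> ?m ! i \<noteq> 0} = {i. i < d \<and> snd f ! i \<noteq> 0} - {j}"
    using bf(2) j by (auto simp: nth_list_update split: if_splits)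
  have jin: "j \<in> {i. i < d \<and> snd f ! i \<noteq> 0}" using j mj hp by simp
  have dim: "fdim (x, ?m) + 1 = fdim f" for x
  proof -
    have "fdim (x, ?m) = card ({i. i < d \<and> snd f ! i \<noteq> 0} - {j})"
      using bf(2) idx by (simp add: fdim_def)
    also have "\<dots> = card {i. i < d \<and> snd f ! i \<noteq> 0} - 1" using jin by (simp add: card_Diff_singleton)
    moreover have "card {i. i < d \<and> snd f ! i \<noteq> 0} > 0" using jin by (auto simp: card_gt_0_iff)
    ultimately show ?thesis using bf(6) by simp
  qed
  have s1: "face_set (fst f, ?m) \<subseteq> face_set f"
  proof
    fix y assume "y \<in> face_set (fst f, ?m)"
    hence y: "length y = d" "\<And>i. i < d \<Longrightarrow> fst f ! i \<le> y ! i \<and> y ! i \<le> fst f ! i + ?m ! i"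
      using bf(1) by (auto simp: face_set_def)
    have "y ! i \<le> fst f ! i + snd f ! i" if "i < d" for i
      using y(2)[OF that] nn[OF that] bf(2) that by (cases "i = j") auto
    thus "y \<in> face_set f" using y bf(5) by auto
  qed
  have s2: "face_set (?xt, ?m) \<subseteq> face_set f"
  proof
    fix y assume "y \<in> face_set (?xt, ?m)"
    hence y: "length y = d" "\<And>i. i < d \<Longrightarrow> ?xt ! i \<le> y ! i \<and> y ! i \<le> ?xt ! i + ?m ! i"
      using bf(1) by (auto simp: face_set_def)
    have "fst f ! i \<le> y ! i \<and> y ! i \<le> fst f ! i + snd f ! i" if "i < d" for i
      using y(2)[OF that] nn[OF that] bf(1,2) that mj hp by (cases "i = j") auto
    thus "y \<in> face_set f" using y bf(5) by auto
  qed
  show "{y \<in> face_set f. y ! j = fst f ! j} \<subseteq> face_set (fst f, ?m)"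
  proof
    fix y assume "y \<in> {y \<in> face_set f. y ! j = fst f ! j}"
    hence y: "length y = d" "\<And>i. i < d \<Longrightarrow> fst f ! i \<le> y ! i \<and> y ! i \<le> fst f ! i + snd f ! i" "y ! j = fst f ! j"
      using bf(5) by auto
    have "fst f ! i \<le> y ! i \<and> y ! i \<le> fst f ! i + ?m ! i" if "i < d" for i
      using y(2)[OF that] y(3) bf(2) that by (cases "i = j") auto
    thus "y \<in> face_set (fst f, ?m)" using y bf(1) by (auto simp: face_set_def)
  qed
  show "{y \<in> face_set f. y ! j = fst f ! j + scale t} \<subseteq> face_set (?xt, ?m)"
  proof
    fix y assume "y \<in> {y \<in> face_set f. y ! j = fst f ! j + scale t}"
    hence y: "length y = d" "\<And>i. i < d \<Longrightarrow> fst f ! i \<le> y ! i \<and> y ! i \<le> fst f ! i + snd f ! i" "y ! j = fst f ! j + scale t"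
      using bf(5) by auto
    have "?xt ! i \<le> y ! i \<and> y ! i \<le> ?xt ! i + ?m ! i" if "i < d" for i
      using y(2)[OF that] y(3) bf(1,2) that by (cases "i = j") auto
    thus "y \<in> face_set (?xt, ?m)" using y bf(1) by (auto simp: face_set_def)
  qed
  show "is_facet d G t (fst f, ?m) f" using fb s1 dim by (simp add: is_facet_def)
  show "is_facet d G t (?xt, ?m) f" using ft s2 dim by (simp add: is_facet_def)
qed


lemma span_box:
  assumes gs: "grid_system d G" and sp: "spanned d G t V f" and VG: "V \<subseteq> G t"
    and j: "j < d" and y: "y \<in> face_set f"
  shows "\<exists>v1\<in>face_set f \<inter> V. \<exists>v2\<in>face_set f \<inter> V. v1 ! j \<le> y ! j \<and> y ! j \<le> v2 ! j"
proof -
  have f: "is_face d G t f" using sp by (simp add: spanned_def)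
  note bf = face_basic[OF gs f]
  have hp: "scale t > 0" by (rule scale_pos)
  have ne: "face_set f \<inter> V \<noteq> {}" and nof: "\<And>g. is_facet d G t g f \<Longrightarrow> \<not> face_set f \<inter> V \<subseteq> face_set g"
    using sp by (auto simp: spanned_def)
  have yb: "fst f ! j \<le> y ! j" "y ! j \<le> fst f ! j + snd f ! j" using y bf(5) j by auto
  have vals: "v ! j = fst f ! j \<or> v ! j = fst f ! j + scale t" if v: "v \<in> face_set f \<inter> V" for v
  proof -
    have vG: "v \<in> G t" using v VG by blast
    obtain k :: int where k: "v ! j - fst f ! j = of_int k * scale t"
      using grid_facts(2)[OF gs] vG bf(3) j by blast
    have vb: "fst f ! j \<le> v ! j" "v ! j \<le> fst f ! j + snd f ! j" using v bf(5) j by auto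
    have "snd f ! j \<le> scale t" using bf(4)[OF j] hp by auto
    hence "of_int k * scale t \<ge> 0 * scale t" "of_int k * scale t \<le> 1 * scale t" using k vb by linarith+
    hence "of_int k \<ge> (0::real)" "of_int k \<le> (1::real)" using hp
      by (simp_all only: mult_le_cancel_right)
    hence "k = 0 \<or> k = 1" by linarith
    thus ?thesis using k by auto
  qed
  show ?thesis
  proof (cases "snd f ! j = 0")
    case True
    obtain v where v: "v \<in> face_set f \<inter> V" using ne by blast
    have "fst f ! j \<le> v ! j \<and> v ! j \<le> fst f ! j + snd f ! j" using v bf(5) j by auto
    hence "v ! j = y ! j" using yb True by linarith
    hence "v ! j \<le> y ! j \<and> y ! j \<le> v ! j" by simp
    thus ?thesis using v by blast
  next
    case False
    hence mj: "snd f ! j = scale t" using bf(4)[OF j] by auto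
    note fc = facets[OF gs f j mj]
    have "\<exists>v1\<in>face_set f \<inter> V. v1 ! j = fst f ! j"
    proof (rule ccontr)
      assume "\<not> ?thesis"
      hence "face_set f \<inter> V \<subseteq> {y \<in> face_set f. y ! j = fst f ! j + scale t}" using vals by blast
      hence "face_set f \<inter> V \<subseteq> face_set ((fst f)[j := fst f ! j + scale t], (snd f)[j := 0])"
        using fc(4) by blast
      thus False using nof[OF fc(2)] by blast
    qed
    moreover have "\<exists>v2\<in>face_set f \<inter> V. v2 ! j = fst f ! j + scale t"
    proof (rule ccontr)
      assume "\<not> ?thesis"
      hence "face_set f \<inter> V \<subseteq> {y \<in> face_set f. y ! j = fst f ! j}" using vals by blast
      hence "face_set f \<inter> V \<subseteq> face_set (fst f, (snd f)[j := 0])"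
        using fc(3) by blast
      thus False using nof[OF fc(1)] by blast
    qed
    ultimately obtain v1 v2 where v: "v1 \<in> face_set f \<inter> V" "v1 ! j = fst f ! j"
      "v2 \<in> face_set f \<inter> V" "v2 ! j = fst f ! j + scale t" by blast
    have "v1 ! j \<le> y ! j \<and> y ! j \<le> v2 ! j" using v(2,4) yb mj by simp
    thus ?thesis using v(1,3) by blast
  qed
qed

lemma spanned_mono:
  assumes "spanned d G t V f" "V \<subseteq> V'"
  shows "spanned d G t V' f"
proof -
  have f: "is_face d G t f" "face_set f \<inter> V \<noteq> {}"
    "\<And>g. is_facet d G t g f \<Longrightarrow> \<not> face_set f \<inter> V \<subseteq> face_set g"
    using assms(1) unfolding spanned_def by auto
  have "face_set f \<inter> V \<subseteq> face_set f \<inter> V'" using assms(2) by auto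
  hence "face_set f \<inter> V' \<noteq> {}" "\<And>g. is_facet d G t g f \<Longrightarrow> \<not> face_set f \<inter> V' \<subseteq> face_set g"
    using f by blast+
  thus ?thesis using f(1) unfolding spanned_def by blast
qed

lemma smallest_active_eq:
  assumes gs: "grid_system d G" and lo: "linear_order_on (active_faces d G P t) r"
    and fa: "f \<in> active_faces d G P t" and fr: "f \<in> \<rho>"
    and sub: "\<forall>g\<in>\<rho>. face_set g \<subseteq> face_set f"
  shows "smallest_active d G P r t \<rho> = f"
proof -
  define cands where "cands = {f \<in> active_faces d G P t. \<forall>g\<in>\<rho>. face_set g \<subseteq> face_set f}"
  have isf: "is_face d G t E" if "E \<in> active_faces d G P t" for E
    using that by (simp add: active_faces_def spanned_def)
  have "refl_on (active_faces d G P t) r"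
    using lo unfolding linear_order_on_def partial_order_on_def preorder_on_def by blast
  hence refl: "(f, f) \<in> r" using fa by (rule refl_onD)
  have fc: "f \<in> cands" using fa sub by (simp add: cands_def)
  have Q: "f \<in> cands \<and> (\<forall>E'\<in>cands. fdim f < fdim E' \<or> (fdim f = fdim E' \<and> (f, E') \<in> r))"
  proof (intro conjI ballI fc)
    fix E' assume E': "E' \<in> cands"
    have sE: "face_set f \<subseteq> face_set E'" using E' fr by (simp add: cands_def)
    have fE: "is_face d G t E'" using E' isf by (simp add: cands_def)
    have le: "fdim f \<le> fdim E'" by (rule fdim_mono[OF gs fE isf[OF fa] sE])
    show "fdim f < fdim E' \<or> (fdim f = fdim E' \<and> (f, E') \<in> r)"
    proof (cases "fdim E' \<le> fdim f")
      case True
      have "f = E'" by (rule face_eq[OF gs fE isf[OF fa] sE True])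
      thus ?thesis using refl by simp
    next
      case False
      thus ?thesis by simp
    qed
  qed
  have U: "E = f" if "E \<in> cands \<and> (\<forall>E'\<in>cands. fdim E < fdim E' \<or> (fdim E = fdim E' \<and> (E, E') \<in> r))" for E
  proof -
    have Ec: "E \<in> cands" using that by blast
    have "fdim E < fdim f \<or> (fdim E = fdim f \<and> (E, f) \<in> r)" using that fc by blast
    hence "fdim E \<le> fdim f" by auto
    moreover have sE: "face_set f \<subseteq> face_set E" using Ec fr by (simp add: cands_def)
    moreover have fE: "is_face d G t E" using Ec isf by (simp add: cands_def)
    ultimately have "f = E" by (intro face_eq[OF gs fE isf[OF fa] sE])
    thus "E = f" by (rule sym)
  qed
  show ?thesis unfolding smallest_active_def Let_def cands_def[symmetric]
  proof (rule the_equality)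
    show "f \<in> cands \<and> (\<forall>E'\<in>cands. fdim f < fdim E' \<or> (fdim f = fdim E' \<and> (f, E') \<in> r))" by (rule Q)
  next
    fix E assume "E \<in> cands \<and> (\<forall>E'\<in>cands. fdim E < fdim E' \<or> (fdim E = fdim E' \<and> (E, E') \<in> r))"
    thus "E = f" by (rule U)
  qed
qed

lemma exists_max_spanned:
  assumes gs: "grid_system d G" and sp: "spanned d G t V f"
  shows "\<exists>f'. max_spanned d G t V f' \<and> face_set f \<subseteq> face_set f'"
proof -
  let ?P = "\<lambda>g. spanned d G t V g \<and> face_set f \<subseteq> face_set g"
  have "\<forall>g. ?P g \<longrightarrow> fdim g < Suc d" using fdim_le_d[OF gs] by (auto simp: spanned_def)
  from Lattices_Big.ex_has_greatest_nat[of ?P f fdim, OF _ this]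
  obtain g where g: "?P g" "\<forall>y. ?P y \<longrightarrow> fdim y \<le> fdim g" using sp by blast
  have "max_spanned d G t V g"
    unfolding max_spanned_def
  proof (intro conjI notI)
    show "spanned d G t V g" using g by blast
    assume "\<exists>f'. spanned d G t V f' \<and> face_set g \<subset> face_set f'"
    then obtain f' where f': "spanned d G t V f'" "face_set g \<subset> face_set f'" by blast
    have "?P f'" using f' g by blast
    hence "fdim f' \<le> fdim g" using g by blast
    moreover have i1: "is_face d G t f'" using f' by (simp add: spanned_def)
    moreover have i2: "is_face d G t g" using g by (simp add: spanned_def)
    moreover have "face_set g \<subseteq> face_set f'" using f'(2) by (rule psubset_imp_subset)
    ultimately have "g = f'" using face_eq[OF gs i1 i2] by blast
    thus False using f' by blast
  qed
  thus ?thesis using g by blast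
qed

lemma sd_sub_X:
  assumes gs: "grid_system d G" and sp: "spanned d G t (avor d G t ` P) f"
    and rho: "\<rho> \<in> sd d G t f"
  shows "\<rho> \<in> Xcplx d G P t"
proof -
  obtain f' where f': "max_spanned d G t (avor d G t ` P) f'" "face_set f \<subseteq> face_set f'"
    using exists_max_spanned[OF gs sp] by blast
  have "\<rho> \<in> sd d G t f'" using rho f'(2) unfolding sd_def by blast
  thus ?thesis using f'(1) unfolding Xcplx_def bspan_def by blast
qed

lemma sd_subset:
  assumes "\<rho> \<in> sd d G t f" "\<rho>' \<subseteq> \<rho>" "\<rho>' \<noteq> {}"
  shows "\<rho>' \<in> sd d G t f"
proof -
  have "finite \<rho>'" using assms(1,2) unfolding sd_def by (auto intro: finite_subset)
  moreover have "\<forall>g\<in>\<rho>'. is_face d G t g \<and> face_set g \<subseteq> face_set f" using assms(1,2) unfolding sd_def by blast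
  moreover have "\<forall>g\<in>\<rho>'. \<forall>h\<in>\<rho>'. face_set g \<subseteq> face_set h \<or> face_set h \<subseteq> face_set g"
    using assms(1,2) unfolding sd_def by blast
  ultimately show ?thesis using assms(3) unfolding sd_def by blast
qed

lemma c2_support:
  fixes c2 :: "face set \<Rightarrow> point set \<Rightarrow> 'k::field"
  assumes gs: "grid_system d G" and lo: "linear_order_on (active_faces d G P t) r"
    and c2m: "aug_chain_map (Xcplx d G P t) L c2"
    and c2c: "carried (Xcplx d G P t) c2 (C2 d G P r t)"
    and sp: "spanned d G t (avor d G t ` P) f" and tau: "\<tau> \<in> sd d G t f"
    and mu: "\<mu> \<in> supp (c2 \<tau>)"
  shows "\<mu> \<subseteq> {p \<in> P. avor d G t p \<in> face_set f}"
proof -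
  define Wf where "Wf = {p \<in> P. avor d G t p \<in> face_set f}"
  have fa: "f \<in> active_faces d G P t" using sp by (simp add: active_faces_def)
  have ff: "is_face d G t f" using sp by (simp add: spanned_def)
  have key: "\<forall>\<nu>\<in>supp (c2 \<rho>'). \<nu> \<subseteq> Wf" if r': "\<rho>' \<in> sd d G t f" "f \<in> \<rho>'" for \<rho>'
  proof
    fix \<nu> assume nu: "\<nu> \<in> supp (c2 \<rho>')"
    have X: "\<rho>' \<in> Xcplx d G P t" by (rule sd_sub_X[OF gs sp r'(1)])
    have sa: "smallest_active d G P r t \<rho>' = f"
      by (rule smallest_active_eq[OF gs lo fa r'(2)]) (use r'(1) in \<open>simp add: sd_def\<close>)
    have "\<nu> \<in> C2 d G P r t \<rho>'" using c2c X nu by (auto simp: carried_def)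
    thus "\<nu> \<subseteq> Wf" using sa by (simp add: C2_def full_simplex_def Wf_def)
  qed
  define \<rho> where "\<rho> = insert f \<tau>"
  have rho: "\<rho> \<in> sd d G t f" using tau ff by (auto simp: sd_def \<rho>_def)
  show ?thesis
  proof (cases "f \<in> \<tau>")
    case True
    thus ?thesis using key[OF tau True] mu by (simp add: Wf_def)
  next
    case False
    show ?thesis
    proof (rule ccontr)
      assume nsub: "\<not> ?thesis"
      have X: "\<rho> \<in> Xcplx d G P t" by (rule sd_sub_X[OF gs sp rho])
      have bdeq: "bdc (c2 \<rho>) = ext c2 (bd \<rho>)" using c2m X by (simp add: aug_chain_map_def)
      have fin: "finite (supp (c2 \<rho>))" using c2m X by (simp add: aug_chain_map_def is_chain_def)
      have lhs: "bdc (c2 \<rho>) \<mu> = 0"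
        unfolding bdc_def ext_def
      proof (rule sum.neutral, rule ballI)
        fix \<nu> assume nu: "\<nu> \<in> supp (c2 \<rho>)"
        have "\<nu> \<subseteq> Wf" using key[OF rho] nu by (simp add: \<rho>_def)
        hence "\<mu> \<notin> supp (bd \<nu> :: _ \<Rightarrow> 'k)" using nsub supp_bd_subset[of \<mu> \<nu>] by (auto simp: Wf_def)
        thus "c2 \<rho> \<nu> * bd \<nu> \<mu> = 0" by (simp add: supp_def)
      qed
      let ?xs = "sorted_list_of_set \<rho>"
      have finr: "finite \<rho>" using rho by (simp add: sd_def)
      have "f \<in> set ?xs" using finr by (simp only: set_sorted_list_of_set) (simp add: \<rho>_def)
      then obtain i0 where i0: "i0 < length ?xs" "?xs ! i0 = f" by (meson in_set_conv_nth)
      have lxs: "length ?xs = card \<rho>" by simp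
      have dxs: "distinct ?xs" by simp
      have tau_eq: "\<rho> - {f} = \<tau>" using False by (auto simp: \<rho>_def)
      have others: "(-1)^i * c2 (\<rho> - {?xs ! i}) \<mu> = 0" if "i \<in> {..<card \<rho>} - {i0}" for i
      proof -
        have i: "i < length ?xs" "i \<noteq> i0" using that lxs by auto
        have "?xs ! i \<noteq> f" using i i0 dxs by (metis nth_eq_iff_index_eq)
        hence fin': "f \<in> \<rho> - {?xs ! i}" by (simp add: \<rho>_def)
        have "\<rho> - {?xs ! i} \<in> sd d G t f" by (rule sd_subset[OF rho]) (use fin' in auto)
        hence "\<mu> \<notin> supp (c2 (\<rho> - {?xs ! i}))" using key fin' nsub by (auto simp: Wf_def)
        thus ?thesis by (simp add: supp_def)
      qed
      have "ext c2 (bd \<rho>) \<mu> = (\<Sum>i<card \<rho>. (-1)^i * c2 (\<rho> - {?xs ! i}) \<mu>)" by (simp add: ext_bd)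
      also have "\<dots> = (-1)^i0 * c2 (\<rho> - {?xs ! i0}) \<mu> + (\<Sum>i\<in>{..<card \<rho>} - {i0}. (-1)^i * c2 (\<rho> - {?xs ! i}) \<mu>)"
        using i0 lxs by (intro sum.remove) auto
      also have "(\<Sum>i\<in>{..<card \<rho>} - {i0}. (-1)^i * c2 (\<rho> - {?xs ! i}) \<mu>) = 0"
        by (rule sum.neutral) (use others in blast)
      finally have "ext c2 (bd \<rho>) \<mu> = (-1)^i0 * c2 \<tau> \<mu>" using i0 tau_eq by simp
      hence "(-1)^i0 * c2 \<tau> \<mu> = 0" using lhs bdeq by simp
      hence "c2 \<tau> \<mu> = 0" by simp
      thus False using mu by (simp add: supp_def)
    qed
  qed
qed

theorem lemma9:
  fixes d :: nat and G :: "int \<Rightarrow> point set" and P :: "point set" and s :: int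
    and r :: "(face \<times> face) set"
    and c1 :: "point set \<Rightarrow> face set \<Rightarrow> 'k::field"
    and c2 :: "face set \<Rightarrow> point set \<Rightarrow> 'k"
  assumes "grid_system d G"
    and "finite P" and "\<forall>p\<in>P. length p = d"
    and "unique_voronoi d G P"
    and "linear_order_on (active_faces d G P (s + 1)) r"
    and "aug_chain_map (Rinf P (scale s)) (Xcplx d G P (s + 1)) c1"
    and "carried (Rinf P (scale s)) c1 (C1 d G (s + 1))"
    and "aug_chain_map (Xcplx d G P (s + 1)) (Rinf P (scale (s + 1))) c2"
    and "carried (Xcplx d G P (s + 1)) c2 (C2 d G P r (s + 1))"
  shows "\<forall>n z. is_chain (Rinf P (scale s)) z \<and> homog n z \<and> bdc z = (\<lambda>_. 0) \<longrightarrow>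
           (\<exists>w. is_chain (Rinf P (scale (s + 1))) w \<and> homog (Suc n) w \<and>
                bdc w = (\<lambda>\<tau>. z \<tau> - ext c2 (ext c1 z) \<tau>))"
proof (intro allI impI)
  fix n and z :: "point set \<Rightarrow> 'k" assume zz: "is_chain (Rinf P (scale s)) z \<and> homog n z \<and> bdc z = (\<lambda>_. 0)"
  note gs = assms(1) and finP = assms(2) and lenP = assms(3) and uv = assms(4) and lo = assms(5)
    and c1m = assms(6) and c1c = assms(7) and c2m = assms(8) and c2c = assms(9)
  define t where "t = s + 1"
  define h where "h = scale t"
  have h2: "2 * scale s = h" by (simp add: h_def t_def scale_succ)
  have hp: "h > 0" by (simp add: h_def scale_pos)
  define K where "K = Rinf P (scale s)"
  define L where "L = Rinf P (scale (s + 1))"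
  define X where "X = Xcplx d G P (s + 1)"
  define a where "a = avor d G (s + 1)"
  define \<phi> where "\<phi> \<sigma> = ext c2 (c1 \<sigma>)" for \<sigma>
  define W where "W \<sigma> = {p \<in> P. \<forall>j<d. \<exists>q1\<in>\<sigma>. \<exists>q2\<in>\<sigma>. a q1 ! j \<le> a p ! j \<and> a p ! j \<le> a q2 ! j}" for \<sigma>
  have Kne: "{} \<notin> K" by (simp add: K_def Rinf_def)
  have Kdown: "\<nu> \<in> K" if "\<sigma> \<in> K" "\<nu> \<subseteq> \<sigma>" "\<nu> \<noteq> {}" for \<sigma> \<nu>
    using that unfolding K_def Rinf_def by blast
  have KP: "\<sigma> \<subseteq> P" if "\<sigma> \<in> K" for \<sigma> using that by (simp add: K_def Rinf_def)
  have Kfin: "finite \<sigma>" if "\<sigma> \<in> K" for \<sigma> using KP[OF that] finP finite_subset by blast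
  have Kclose: "\<bar>p ! j - q ! j\<bar> \<le> h" if "\<sigma> \<in> K" "p \<in> \<sigma>" "q \<in> \<sigma>" "j < d" for \<sigma> p q j
    using that lenP KP[OF that(1)] h2 unfolding K_def Rinf_def by auto
  have c1p: "is_chain X (c1 \<sigma>) \<and> homog (card \<sigma>) (c1 \<sigma>) \<and> bdc (c1 \<sigma>) = ext c1 (bd \<sigma>)"
    if "\<sigma> \<in> insert {} K" for \<sigma> using c1m that unfolding aug_chain_map_def K_def X_def by blast
  have c10: "c1 {} = delta {}" using c1m by (simp add: aug_chain_map_def delta_def)
  have c2p: "is_chain L (c2 \<tau>) \<and> homog (card \<tau>) (c2 \<tau>) \<and> bdc (c2 \<tau>) = ext c2 (bd \<tau>)"
    if "\<tau> \<in> insert {} X" for \<tau> using c2m that unfolding aug_chain_map_def L_def X_def by blast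
  have c20: "c2 {} = delta {}" using c2m by (simp add: aug_chain_map_def delta_def)
  have faceK: "\<nu> \<in> insert {} K" if "\<sigma> \<in> insert {} K" "\<nu> \<in> supp (bd \<sigma> :: _ \<Rightarrow> 'k)" for \<sigma> \<nu>
  proof -
    have "\<nu> \<subseteq> \<sigma>" by (rule supp_bd_subset[OF that(2)])
    thus ?thesis using that(1) Kdown by auto
  qed
  have c1X: "\<tau> \<in> insert {} X" if "\<sigma> \<in> insert {} K" "\<tau> \<in> supp (c1 \<sigma>)" for \<sigma> \<tau>
    using c1p[OF that(1)] that(2) by (auto simp: is_chain_def)
  have fc1: "finite (supp (c1 \<sigma>))" if "\<sigma> \<in> insert {} K" for \<sigma>
    using c1p[OF that] by (simp add: is_chain_def)
  have fc2: "finite (supp (c2 \<tau>))" if "\<tau> \<in> insert {} X" for \<tau>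
    using c2p[OF that] by (simp add: is_chain_def)
  have phi: "is_chain L (\<phi> \<sigma>) \<and> homog (card \<sigma>) (\<phi> \<sigma>) \<and> bdc (\<phi> \<sigma>) = ext \<phi> (bd \<sigma>)"
    if sK: "\<sigma> \<in> insert {} K" for \<sigma>
  proof (intro conjI)
    have fin: "finite (supp (\<phi> \<sigma>))" unfolding \<phi>_def
      by (rule finite_supp_ext[OF fc1[OF sK]]) (rule fc2[OF c1X[OF sK]])
    show "is_chain L (\<phi> \<sigma>)" unfolding is_chain_def
    proof (intro conjI fin subsetI)
      fix \<mu> assume "\<mu> \<in> supp (\<phi> \<sigma>)"
      then obtain \<tau> where "\<tau> \<in> supp (c1 \<sigma>)" "\<mu> \<in> supp (c2 \<tau>)"
        using supp_ext[of c2 "c1 \<sigma>"] unfolding \<phi>_def by blast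
      thus "\<mu> \<in> insert {} L" using c2p[OF c1X[OF sK]] by (auto simp: is_chain_def)
    qed
    show "homog (card \<sigma>) (\<phi> \<sigma>)" unfolding homog_def
    proof
      fix \<mu> assume "\<mu> \<in> supp (\<phi> \<sigma>)"
      then obtain \<tau> where tt: "\<tau> \<in> supp (c1 \<sigma>)" "\<mu> \<in> supp (c2 \<tau>)"
        using supp_ext[of c2 "c1 \<sigma>"] unfolding \<phi>_def by blast
      have "card \<tau> = card \<sigma>" using c1p[OF sK] tt(1) by (simp add: homog_def)
      thus "card \<mu> = card \<sigma>" using c2p[OF c1X[OF sK tt(1)]] tt(2) by (simp add: homog_def)
    qed
    have "bdc (\<phi> \<sigma>) = ext (\<lambda>\<tau>. bdc (c2 \<tau>)) (c1 \<sigma>)" unfolding \<phi>_def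
      by (rule bdc_ext[OF fc1[OF sK]]) (rule fc2[OF c1X[OF sK]])
    also have "\<dots> = ext (\<lambda>\<tau>. ext c2 (bd \<tau>)) (c1 \<sigma>)"
      by (rule ext_cong) (use c2p c1X[OF sK] in blast)
    also have "\<dots> = ext c2 (bdc (c1 \<sigma>))" unfolding bdc_def
      by (rule ext_ext[symmetric, OF fc1[OF sK]]) simp
    also have "\<dots> = ext c2 (ext c1 (bd \<sigma>))" using c1p[OF sK] by simp
    also have "\<dots> = ext \<phi> (bd \<sigma>)" unfolding \<phi>_def
      by (rule ext_ext[OF finite_supp_bd]) (rule fc1[OF faceK[OF sK]])
    finally show "bdc (\<phi> \<sigma>) = ext \<phi> (bd \<sigma>)" .
  qed
  have phi0: "\<phi> {} = delta {}" by (simp add: \<phi>_def c10 c20)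
  have Wsub: "\<sigma> \<subseteq> W \<sigma>" if "\<sigma> \<in> K" for \<sigma>
    using KP[OF that] unfolding W_def by blast
  have Wmono: "W \<nu> \<subseteq> W \<sigma>" if "\<nu> \<subseteq> \<sigma>" for \<sigma> \<nu>
    using that unfolding W_def by blast
  have Wfin: "finite (W \<sigma>)" for \<sigma> using finP by (simp add: W_def)
  have aG: "a p \<in> G (s + 1)" "in_cell d (s + 1) (a p) p" if "p \<in> P" for p
    using avor_facts[OF uv that] by (simp_all add: a_def)
  have Wphi: "\<mu> \<subseteq> W \<sigma>" if sK: "\<sigma> \<in> K" and mu: "\<mu> \<in> supp (\<phi> \<sigma>)" for \<sigma> \<mu>
  proof -
    obtain \<tau> where tt: "\<tau> \<in> supp (c1 \<sigma>)" "\<mu> \<in> supp (c2 \<tau>)"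
      using mu supp_ext[of c2 "c1 \<sigma>"] unfolding \<phi>_def by blast
    have "\<tau> \<in> C1 d G (s + 1) \<sigma>" using c1c sK tt(1) by (auto simp: carried_def K_def)
    then obtain f where f: "max_spanned d G (s + 1) (a ` \<sigma>) f" "\<tau> \<in> sd d G (s + 1) f"
      unfolding C1_def bspan_def a_def by blast
    have spf: "spanned d G (s + 1) (a ` \<sigma>) f" using f(1) by (simp add: max_spanned_def)
    have spP: "spanned d G (s + 1) (avor d G (s + 1) ` P) f"
      using spanned_mono[OF spf] KP[OF sK] by (auto simp: a_def)
    have "\<mu> \<subseteq> {p \<in> P. avor d G (s + 1) p \<in> face_set f}"
      by (rule c2_support[OF gs lo c2m c2c spP f(2) tt(2)])
    moreover have "{p \<in> P. a p \<in> face_set f} \<subseteq> W \<sigma>"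
    proof
      fix p assume p: "p \<in> {p \<in> P. a p \<in> face_set f}"
      have VG: "a ` \<sigma> \<subseteq> G (s + 1)" using aG KP[OF sK] by blast
      have "\<exists>q1\<in>\<sigma>. \<exists>q2\<in>\<sigma>. a q1 ! j \<le> a p ! j \<and> a p ! j \<le> a q2 ! j" if j: "j < d" for j
      proof -
        obtain v1 v2 where v: "v1 \<in> face_set f \<inter> a ` \<sigma>" "v2 \<in> face_set f \<inter> a ` \<sigma>"
          "v1 ! j \<le> a p ! j" "a p ! j \<le> v2 ! j"
          using span_box[OF gs spf VG j] p by blast
        thus ?thesis by blast
      qed
      thus "p \<in> W \<sigma>" using p by (simp add: W_def)
    qed
    ultimately show ?thesis by (simp add: a_def)
  qed
  have Wdiam: "p ! j - p' ! j \<le> 2 * h" if sK: "\<sigma> \<in> K" and pp: "p \<in> W \<sigma>" "p' \<in> W \<sigma>" and j: "j < d"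
    for \<sigma> p p' j
  proof -
    obtain q2 where q2: "q2 \<in> \<sigma>" "a p ! j \<le> a q2 ! j" using pp(1) j unfolding W_def by blast
    obtain q1 where q1: "q1 \<in> \<sigma>" "a q1 ! j \<le> a p' ! j" using pp(2) j unfolding W_def by blast
    have PP: "p \<in> P" "p' \<in> P" "q1 \<in> P" "q2 \<in> P" using pp q1 q2 KP[OF sK] unfolding W_def by auto
    have "q2 ! j - q1 ! j \<le> h" using Kclose[OF sK q2(1) q1(1) j] by simp
    hence g: "a q2 ! j - a q1 ! j \<le> h"
      using grid_close[OF gs uv PP(4) PP(3) j] by (simp add: a_def h_def t_def)
    have c1: "\<bar>p ! j - a p ! j\<bar> \<le> h / 2" using aG(2)[OF PP(1)] j by (simp add: in_cell_def h_def t_def)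
    have c2: "\<bar>p' ! j - a p' ! j\<bar> \<le> h / 2" using aG(2)[OF PP(2)] j by (simp add: in_cell_def h_def t_def)
    have "p ! j \<le> a p ! j + h / 2" using c1 abs_le_iff[of "p ! j - a p ! j" "h / 2"] by linarith
    moreover have "p' ! j \<ge> a p' ! j - h / 2" using c2 abs_le_iff[of "p' ! j - a p' ! j" "h / 2"] by linarith
    ultimately show ?thesis using g q1(2) q2(2) by linarith
  qed
  have WL: "T \<in> L" if sK: "\<sigma> \<in> K" and T: "T \<noteq> {}" "T \<subseteq> W \<sigma>" for \<sigma> T
  proof -
    have TP: "T \<subseteq> P" using T unfolding W_def by blast
    have "\<bar>p ! j - q ! j\<bar> \<le> 2 * scale (s + 1)" if "p \<in> T" "q \<in> T" "j < length p" for p q j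
    proof -
      have j: "j < d" using that TP lenP by auto
      have "p ! j - q ! j \<le> 2 * h" "q ! j - p ! j \<le> 2 * h"
        using Wdiam[OF sK _ _ j] that T by blast+
      thus ?thesis by (simp add: h_def t_def)
    qed
    thus ?thesis using T TP unfolding L_def Rinf_def by blast
  qed
  have zK: "is_chain K z" "homog n z" "bdc z = (\<lambda>_. 0)" using zz by (simp_all add: K_def)
  have Wmono': "\<And>\<sigma> \<nu>. \<sigma> \<in> K \<Longrightarrow> \<nu> \<in> K \<Longrightarrow> \<nu> \<subseteq> \<sigma> \<Longrightarrow> W \<nu> \<subseteq> W \<sigma>" using Wmono by blast
  have "\<exists>w. is_chain L w \<and> homog (Suc n) w \<and> bdc w = (\<lambda>\<tau>. z \<tau> - ext \<phi> z \<tau>)"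
    by (rule homotopy[where K=K and L=L and W=W and \<phi>=\<phi>])
       (fact Kne, fact Kdown, fact Kfin, fact phi, fact phi0, fact Wsub, fact Wmono', fact Wphi,
        rule Wfin, fact WL, fact zK(1), fact zK(2), fact zK(3))
  then obtain w where w: "is_chain L w" "homog (Suc n) w" "bdc w = (\<lambda>\<tau>. z \<tau> - ext \<phi> z \<tau>)"
    by blast
  have fz: "finite (supp z)" using zK(1) by (simp add: is_chain_def)
  have "ext \<phi> z = ext c2 (ext c1 z)" unfolding \<phi>_def
    by (rule ext_ext[symmetric, OF fz]) (rule fc1, use zK(1) in \<open>auto simp: is_chain_def\<close>)
  thus "\<exists>w. is_chain (Rinf P (scale (s + 1))) w \<and> homog (Suc n) w \<and>
                bdc w = (\<lambda>\<tau>. z \<tau> - ext c2 (ext c1 z) \<tau>)"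
    using w by (auto simp: L_def)
qed


end
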